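(* In any of the three models (Poisson multigraph, exponential, uniform) and for any fixed $k\ge1$, with probability tending to $1$ as $n\to\infty$, $T_k$ exists and uses only edges of cost at most $2k\log n/n$.
   Context: Exponential model: the complete graph $K_n$ with i.i.d. edge costs exponential with mean 1. Uniform model: $K_n$ with i.i.d. edge costs uniform on $(0,1)$. Poisson model: for each unordered pair of distinct vertices of $[n]$, infinitely many parallel edges whose costs are the points of an intensity-1 Poisson process on $(0,\infty)$, independent over pairs. In each model, $T_1$ is the minimum-cost spanning tree, and $T_k$ ($k\ge2$) is the minimum-cost spanning tree of the (multi)graph with the edges of $T_1,\dots,T_{k-1}$ deleted (it may fail to exist in the simple-graph models if that graph is disconnected). *)

theory Defs
  imports "HOL-Probability.Probability"
begin

text \<open>A (multi)graph is given by an index set of edges together with a map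
  ends assigning to each edge its (two-element) set of end vertices, and a
  cost function w on edges.\<close>

definition adj :: "('e \<Rightarrow> nat set) \<Rightarrow> 'e set \<Rightarrow> nat \<Rightarrow> nat \<Rightarrow> bool" where
  "adj ends F u v \<longleftrightarrow> (\<exists>e\<in>F. ends e = {u, v} \<and> u \<noteq> v)"

definition connects :: "('e \<Rightarrow> nat set) \<Rightarrow> 'e set \<Rightarrow> nat \<Rightarrow> nat \<Rightarrow> bool" where
  "connects ends F u v \<longleftrightarrow> (adj ends F)\<^sup>*\<^sup>* u v"

definition is_spanning_tree :: "nat \<Rightarrow> ('e \<Rightarrow> nat set) \<Rightarrow> 'e set \<Rightarrow> bool" where
  "is_spanning_tree n ends F \<longleftrightarrow>
     finite F \<and> (\<forall>e\<in>F. ends e \<subseteq> {0..<n}) \<and>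
     (\<forall>u\<in>{0..<n}. \<forall>v\<in>{0..<n}. connects ends F u v) \<and>
     (\<forall>e\<in>F. \<forall>u v. ends e = {u, v} \<longrightarrow> \<not> connects ends (F - {e}) u v)"

definition is_mst :: "nat \<Rightarrow> ('e \<Rightarrow> nat set) \<Rightarrow> ('e \<Rightarrow> real) \<Rightarrow> 'e set \<Rightarrow> 'e set \<Rightarrow> bool" where
  "is_mst n ends w A F \<longleftrightarrow> F \<subseteq> A \<and> is_spanning_tree n ends F \<and>
     (\<forall>F'. F' \<subseteq> A \<longrightarrow> is_spanning_tree n ends F' \<longrightarrow> sum w F \<le> sum w F')"

text \<open>The sequence is defined (Some) only
  when each of these minimum spanning trees exists and is unique (which holds
  almost surely whenever the MST exists, since costs are a.s. distinct).\<close>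

fun msts :: "nat \<Rightarrow> ('e \<Rightarrow> nat set) \<Rightarrow> ('e \<Rightarrow> real) \<Rightarrow> 'e set \<Rightarrow> nat \<Rightarrow> 'e set list option" where
  "msts n ends w A 0 = Some []"
| "msts n ends w A (Suc k) =
     (case msts n ends w A k of
        None \<Rightarrow> None
      | Some Ts \<Rightarrow>
          (let B = A - \<Union>(set Ts) in
           if \<exists>!F. is_mst n ends w B F
           then Some (Ts @ [THE F. is_mst n ends w B F]) else None))"

definition Tk_exists_and_cheap ::
  "nat \<Rightarrow> ('e \<Rightarrow> nat set) \<Rightarrow> ('e \<Rightarrow> real) \<Rightarrow> 'e set \<Rightarrow> nat \<Rightarrow> real \<Rightarrow> bool" where
  "Tk_exists_and_cheap n ends w A k c \<longleftrightarrow>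
     (case msts n ends w A k of
        None \<Rightarrow> False
      | Some Ts \<Rightarrow> (\<forall>e\<in>last Ts. w e \<le> c))"

definition vpairs :: "nat \<Rightarrow> (nat \<times> nat) set" where
  "vpairs n = {(i, j). i < j \<and> j < n}"

definition pair_ends :: "nat \<times> nat \<Rightarrow> nat set" where
  "pair_ends p = {fst p, snd p}"

definition exp_model :: "nat \<Rightarrow> (nat \<times> nat \<Rightarrow> real) measure" where
  "exp_model n = PiM (vpairs n) (\<lambda>_. density lborel (exponential_density 1))"

definition unif_model :: "nat \<Rightarrow> (nat \<times> nat \<Rightarrow> real) measure" where
  "unif_model n = PiM (vpairs n) (\<lambda>_. uniform_measure lborel {0<..<1})"

text \<open>Poisson model: for each pair p, i.i.d. Exp(1) inter-arrival times X(p,0),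
  X(p,1), ...; the m-th parallel edge (p,m) between the endpoints of p has cost
  X(p,0)+...+X(p,m), so that the costs of the parallel edges at p are the points
  of an intensity-1 Poisson process on (0,\<infinity>), independently over pairs.\<close>

definition poisson_model :: "nat \<Rightarrow> ((nat \<times> nat) \<times> nat \<Rightarrow> real) measure" where
  "poisson_model n = PiM (vpairs n \<times> UNIV) (\<lambda>_. density lborel (exponential_density 1))"

definition poisson_edges :: "nat \<Rightarrow> ((nat \<times> nat) \<times> nat) set" where
  "poisson_edges n = vpairs n \<times> UNIV"

definition poisson_ends :: "(nat \<times> nat) \<times> nat \<Rightarrow> nat set" where
  "poisson_ends e = pair_ends (fst e)"

definition poisson_cost :: "((nat \<times> nat) \<times> nat \<Rightarrow> real) \<Rightarrow> (nat \<times> nat) \<times> nat \<Rightarrow> real" where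
  "poisson_cost X e = (\<Sum>l\<le>snd e. X (fst e, l))"

definition thr :: "nat \<Rightarrow> nat \<Rightarrow> real" where
  "thr k n = 2 * real k * ln (real n) / real n"

end

theory Submission
  imports Defs "HOL-Probability.Probability" "HOL-Real_Asymp.Real_Asymp"
begin

lemma fin_argmin:
  fixes f :: "'a \<Rightarrow> real"
  assumes "finite C" "C \<noteq> {}"
  obtains x where "x \<in> C" "\<And>y. y \<in> C \<Longrightarrow> f x \<le> f y"
proof -
  have "Min (f ` C) \<in> f ` C" using assms by simp
  then obtain x where "x \<in> C" "f x = Min (f ` C)" by auto
  then show ?thesis using that assms by (metis Min_le finite_imageI imageI)
qed
lemma fin_argmax:
  fixes f :: "'a \<Rightarrow> real"
  assumes "finite C" "C \<noteq> {}"
  obtains x where "x \<in> C" "\<And>y. y \<in> C \<Longrightarrow> f y \<le> f x"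
proof -
  have "Max (f ` C) \<in> f ` C" using assms by simp
  then obtain x where "x \<in> C" "f x = Max (f ` C)" by auto
  then show ?thesis using that assms by (metis Max_ge finite_imageI imageI)
qed

lemma adj_sym: "adj ends F u v \<Longrightarrow> adj ends F v u"
  unfolding adj_def by (auto simp: insert_commute)

lemma adj_mono: "F \<subseteq> G \<Longrightarrow> adj ends F u v \<Longrightarrow> adj ends G u v"
  unfolding adj_def by auto

lemma conn_refl[simp]: "connects ends F u u"
  unfolding connects_def by simp

lemma conn_trans: "connects ends F u v \<Longrightarrow> connects ends F v w \<Longrightarrow> connects ends F u w"
  unfolding connects_def by (rule rtranclp_trans)

lemma conn_sym: "connects ends F u v \<Longrightarrow> connects ends F v u"
  unfolding connects_def
proof (induction rule: rtranclp_induct)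
  case base then show ?case by simp
next
  case (step y z)
  then show ?case using adj_sym[OF step(2)] by (meson converse_rtranclp_into_rtranclp)
qed

lemma conn_mono: "F \<subseteq> G \<Longrightarrow> connects ends F u v \<Longrightarrow> connects ends G u v"
  unfolding connects_def by (metis adj_mono mono_rtranclp)

lemma conn_edge: "e \<in> F \<Longrightarrow> ends e = {u, v} \<Longrightarrow> u \<noteq> v \<Longrightarrow> connects ends F u v"
  unfolding connects_def adj_def by (rule r_into_rtranclp) auto

lemma conn_empty: "connects ends {} u v \<Longrightarrow> u = v"
  unfolding connects_def adj_def by (induction rule: rtranclp_induct) auto

lemma conn_step: "connects ends F u v \<Longrightarrow> adj ends F v w \<Longrightarrow> connects ends F u w"
  unfolding connects_def by (rule rtranclp.rtrancl_into_rtrancl)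

lemma conn_swap:
  assumes "{a, b} = {u, v}" "connects ends F u v"
  shows "connects ends F a b"
proof -
  have "(a = u \<and> b = v) \<or> (a = v \<and> b = u)" using assms(1) doubleton_eq_iff[of a b u v] by simp
  then show ?thesis
  proof (elim disjE)
    assume "a = u \<and> b = v" then show ?thesis using assms(2) by simp
  next
    assume "a = v \<and> b = u" then show ?thesis using conn_sym[OF assms(2)] by simp
  qed
qed

lemma reroute:
  assumes "connects ends (F - {g}) a b" "ends g = {a, b}" "connects ends F x y"
  shows "connects ends (F - {g}) x y"
  using assms(3)
  unfolding connects_def[of ends F]
proof (induction rule: rtranclp_induct)
  case base then show ?case by simp
next
  case (step y z)
  from step(2) obtain e where e: "e \<in> F" "ends e = {y, z}" "y \<noteq> z" unfolding adj_def by auto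
  show ?case
  proof (cases "e = g")
    case True
    then have "connects ends (F - {g}) y z"
      using assms(1,2) e conn_sym by (metis doubleton_eq_iff conn_refl)
    then show ?thesis using step(3) conn_trans by metis
  next
    case False
    then have "adj ends (F - {g}) y z" using e unfolding adj_def by auto
    then show ?thesis using step(3) conn_step by metis
  qed
qed

lemma sides:
  assumes "connects ends F x y" "\<not> connects ends (F - {g}) x y" "ends g = {a, b}"
  shows "(connects ends (F - {g}) x a \<and> connects ends (F - {g}) b y) \<or>
         (connects ends (F - {g}) x b \<and> connects ends (F - {g}) a y)"
proof -
  let ?C = "connects ends (F - {g})"
  have "?C x y \<or> (?C x a \<and> ?C b y) \<or> (?C x b \<and> ?C a y)"
    using assms(1) unfolding connects_def[of ends F]
  proof (induction rule: rtranclp_induct)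
    case base then show ?case by simp
  next
    case (step y z)
    from step(2) obtain e where e: "e \<in> F" "ends e = {y, z}" "y \<noteq> z" unfolding adj_def by auto
    show ?case
    proof (cases "e = g")
      case True
      then have "(y = a \<and> z = b) \<or> (y = b \<and> z = a)" using e assms(3) by (auto simp: doubleton_eq_iff)
      then show ?thesis using step(3) by (metis conn_refl)
    next
      case False
      then have "adj ends (F - {g}) y z" using e unfolding adj_def by auto
      then show ?thesis using step(3) conn_step by metis
    qed
  qed
  then show ?thesis using assms(2) by blast
qed

lemma cross:
  assumes "connects ends F x y" "x \<in> S" "y \<notin> S"
  shows "\<exists>e\<in>F. \<exists>a b. ends e = {a, b} \<and> a \<in> S \<and> b \<notin> S"
  using assms unfolding connects_def
proof (induction rule: rtranclp_induct)
  case base then show ?case by simp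
next
  case (step y z)
  from step(2) obtain e where e: "e \<in> F" "ends e = {y, z}" "y \<noteq> z" unfolding adj_def by auto
  show ?case
  proof (cases "y \<in> S")
    case True then show ?thesis using e step by blast
  next
    case False then show ?thesis using step by blast
  qed
qed

definition wfe :: "nat \<Rightarrow> ('e \<Rightarrow> nat set) \<Rightarrow> 'e set \<Rightarrow> bool" where
  "wfe n ends A \<longleftrightarrow> (\<forall>e\<in>A. \<exists>u v. u \<noteq> v \<and> u < n \<and> v < n \<and> ends e = {u, v})"

lemma wfeD: "wfe n ends A \<Longrightarrow> e \<in> A \<Longrightarrow> ends e = {u, v} \<Longrightarrow> u \<noteq> v \<and> u < n \<and> v < n"
  unfolding wfe_def by (force simp: doubleton_eq_iff)

lemma wfe_obtain: "wfe n ends A \<Longrightarrow> e \<in> A \<Longrightarrow> \<exists>u v. ends e = {u, v}"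
  unfolding wfe_def by blast

lemma tree_exchange:
  assumes T: "is_spanning_tree n ends F" and g: "g \<in> F" "ends g = {a, b}"
    and S: "S = {x. connects ends (F - {g}) a x}"
    and h: "h \<notin> F" "ends h = {x0, y0}" "x0 \<in> S" "y0 \<notin> S" "y0 < n" "x0 < n"
  shows "is_spanning_tree n ends (insert h (F - {g}))"
proof -
  let ?F = "insert h (F - {g})"
  let ?C = "connects ends (F - {g})"
  have fin: "finite F" and ends_in: "\<forall>e\<in>F. ends e \<subseteq> {0..<n}"
    and span: "\<forall>u\<in>{0..<n}. \<forall>v\<in>{0..<n}. connects ends F u v"
    and acyc: "\<forall>e\<in>F. \<forall>u v. ends e = {u, v} \<longrightarrow> \<not> connects ends (F - {e}) u v"
    using T unfolding is_spanning_tree_def by auto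
  have nab: "\<not> ?C a b" using acyc g by blast
  have an: "a < n" "b < n" using ends_in g by auto
  have side: "?C a z \<or> ?C b z" if "z < n" for z
  proof -
    have "connects ends F a z" using span an that by auto
    then show ?thesis using sides[of ends F a z g a b] g(2) by (metis conn_sym)
  qed
  have "x0 \<noteq> y0" using h by auto
  have by0: "?C b y0" using side[OF h(5)] h(4) S by auto
  have ax0: "?C a x0" using h(3) S by auto
  have sub: "F - {g} \<subseteq> ?F" by auto
  have "connects ends ?F a b"
  proof -
    have "connects ends ?F a x0" using conn_mono[OF sub ax0] .
    moreover have "connects ends ?F x0 y0" using conn_edge[of h ?F ends x0 y0] h \<open>x0 \<noteq> y0\<close> by auto
    moreover have "connects ends ?F y0 b" using conn_mono[OF sub conn_sym[OF by0]] .
    ultimately show ?thesis using conn_trans by metis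
  qed
  then have aall: "connects ends ?F a z" if "z < n" for z
    using side[OF that] conn_mono[OF sub] conn_trans by metis
  have span': "\<forall>u\<in>{0..<n}. \<forall>v\<in>{0..<n}. connects ends ?F u v"
    using aall conn_sym conn_trans by (metis atLeastLessThan_iff)
  have acyc': "\<forall>e\<in>?F. \<forall>u v. ends e = {u, v} \<longrightarrow> \<not> connects ends (?F - {e}) u v"
  proof (intro ballI allI impI notI)
    fix f p q assume f: "f \<in> ?F" and fe: "ends f = {p, q}" and c: "connects ends (?F - {f}) p q"
    show False
    proof (cases "f = h")
      case True
      then have "?F - {f} = F - {g}" using h(1) g by auto
      then have "?C p q" using c by simp
      then have "?C x0 y0" using fe True h(2) by (metis conn_sym doubleton_eq_iff)
      then show False using h(3,4) S conn_trans by blast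
    next
      case False
      then have fF: "f \<in> F" "f \<noteq> g" using f by auto
      have ncF: "\<not> connects ends (F - {f}) p q" using acyc fF fe by blast
      let ?H = "F - {g} - {f}"
      have eqF: "?F - {f} = insert h ?H" using False by auto
      have "\<not> connects ends ?H p q"
        using ncF conn_mono[of ?H "F - {f}"] by auto
      moreover have "connects ends (insert h ?H) p q" using c eqF by simp
      moreover have "insert h ?H - {h} = ?H" using h(1) by auto
      ultimately have sd: "(connects ends ?H p x0 \<and> connects ends ?H y0 q) \<or>
         (connects ends ?H p y0 \<and> connects ends ?H x0 q)"
        using sides[of ends "insert h ?H" p q h x0 y0] h(2) by auto
      have HF: "?H \<subseteq> F - {g}" by auto
      have adjpq: "?C p q" using conn_edge[of f "F - {g}" ends p q] fF fe
        by (metis conn_refl insertI1 insert_Diff insert_Diff_single insert_iff)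
      have nS: "\<not> ?C a y0" using h(4) S by auto
      from sd show False
      proof
        assume A: "connects ends ?H p x0 \<and> connects ends ?H y0 q"
        have "?C a p" using ax0 conn_mono[OF HF] A conn_sym conn_trans by metis
        then have "?C a q" using adjpq conn_trans by metis
        then have "?C a y0" using A conn_mono[OF HF] conn_sym conn_trans by metis
        then show False using nS by simp
      next
        assume A: "connects ends ?H p y0 \<and> connects ends ?H x0 q"
        have "?C a q" using ax0 conn_mono[OF HF] A conn_sym conn_trans by metis
        then have "?C a p" using adjpq conn_trans conn_sym by metis
        then have "?C a y0" using A conn_mono[OF HF] conn_sym conn_trans by metis
        then show False using nS by simp
      qed
    qed
  qed
  show ?thesis unfolding is_spanning_tree_def
    using fin ends_in span' acyc' h an by (auto)
qed

locale kr =
  fixes n :: nat and ends :: "'e \<Rightarrow> nat set" and w :: "'e \<Rightarrow> real" and B :: "'e set" and c :: real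
  assumes wf: "wfe n ends B"
    and fin: "finite {e\<in>B. w e \<le> c}"
    and inj: "inj_on w {e\<in>B. w e \<le> c}"
    and span: "\<forall>u<n. \<forall>v<n. connects ends {e\<in>B. w e \<le> c} u v"
begin

abbreviation "B' \<equiv> {e\<in>B. w e \<le> c}"

definition K where
  "K = {e\<in>B'. \<forall>u v. ends e = {u, v} \<longrightarrow> \<not> connects ends {f\<in>B'. w f < w e} u v}"

lemma K_sub: "K \<subseteq> B'" unfolding K_def by auto

lemma K_span: "u < n \<Longrightarrow> v < n \<Longrightarrow> connects ends K u v"
proof (rule ccontr)
  assume u: "u < n" and v: "v < n" and nc: "\<not> connects ends K u v"
  define S where "S = {x. connects ends K u x}"
  have uS: "u \<in> S" and vS: "v \<notin> S" using nc unfolding S_def by auto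
  define C where "C = {e\<in>B'. \<exists>a b. ends e = {a, b} \<and> a \<in> S \<and> b \<notin> S}"
  have cB: "connects ends B' u v" using span u v by blast
  have "C \<noteq> {}" using cross[OF cB uS vS] unfolding C_def by blast
  moreover have "finite C" using fin unfolding C_def by (rule rev_finite_subset) blast
  ultimately obtain e0 where e0: "e0 \<in> C" "\<And>e. e \<in> C \<Longrightarrow> w e0 \<le> w e"
    using fin_argmin[of C w] by blast
  obtain a b where ab: "ends e0 = {a, b}" "a \<in> S" "b \<notin> S" "e0 \<in> B'" using e0(1) unfolding C_def by blast
  have "e0 \<in> K"
    unfolding K_def
  proof (intro CollectI conjI allI impI notI)
    show "e0 \<in> B" "w e0 \<le> c" using ab by auto
    fix p q assume pq: "ends e0 = {p, q}" and cc: "connects ends {f\<in>B'. w f < w e0} p q"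
    have "(p = a \<and> q = b) \<or> (p = b \<and> q = a)" using pq ab(1) doubleton_eq_iff[of p q a b] by simp
    then have "connects ends {f\<in>B'. w f < w e0} a b"
    proof (elim disjE)
      assume "p = a \<and> q = b" then show ?thesis using cc by simp
    next
      assume "p = b \<and> q = a" then show ?thesis using cc conn_sym[of ends _ b a] by simp
    qed
    from cross[OF this ab(2,3)] obtain f a' b' where f: "f \<in> {f\<in>B'. w f < w e0}" "ends f = {a', b'}" "a' \<in> S" "b' \<notin> S"
      by blast
    then have "f \<in> C" unfolding C_def by blast
    then have "w e0 \<le> w f" using e0(2) by blast
    then show False using f(1) by simp
  qed
  have "a \<noteq> b" using ab by blast
  then have "connects ends K a b" using conn_edge[of e0 K ends a b] \<open>e0 \<in> K\<close> ab(1) by blast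
  then have "b \<in> S" using ab(2) unfolding S_def using conn_trans by (metis mem_Collect_eq)
  then show False using ab by simp
qed

lemma K_acyc:
  assumes e: "e \<in> K" "ends e = {u, v}"
  shows "\<not> connects ends (K - {e}) u v"
proof
  assume c0: "connects ends (K - {e}) u v"
  have eB: "e \<in> B" "w e \<le> c" using e(1) K_sub by auto
  have uv: "u \<noteq> v" using wfeD[OF wf eB(1) e(2)] by simp
  have eK: "\<not> connects ends {f\<in>B'. w f < w e} u v" using e unfolding K_def by blast
  define P where "P = (\<lambda>H. H \<subseteq> K - {e} \<and> connects ends H u v)"
  have "P (K - {e})" using c0 P_def by simp
  from ex_has_least_nat[of P, OF this, of card] obtain H0 where
    H0: "P H0" "\<And>H. P H \<Longrightarrow> card H0 \<le> card H" by blast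
  have H0sub: "H0 \<subseteq> K - {e}" and H0c: "connects ends H0 u v" using H0(1) P_def by auto
  have finK: "finite K" using fin K_sub by (rule finite_subset[rotated])
  have finH0: "finite H0" using H0sub finK by (meson finite_Diff finite_subset)
  have "H0 \<noteq> {}"
  proof
    assume "H0 = {}"
    then have "u = v" using H0c conn_empty[of ends u v] by simp
    then show False using uv by simp
  qed
  then obtain g where g: "g \<in> H0" "\<And>f. f \<in> H0 \<Longrightarrow> w f \<le> w g"
    using finH0 fin_argmax[of H0 w] by blast
  have gK: "g \<in> K" "g \<noteq> e" using g(1) H0sub by auto
  have gB: "g \<in> B'" using gK(1) K_sub by blast
  have gK': "\<And>a b. ends g = {a, b} \<Longrightarrow> \<not> connects ends {f\<in>B'. w f < w g} a b"
    using gK(1) unfolding K_def by blast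
  show False
  proof (cases "w g < w e")
    case True
    have "H0 \<subseteq> {f\<in>B'. w f < w e}"
    proof
      fix f assume f: "f \<in> H0"
      then have "f \<in> B'" using H0sub K_sub by blast
      moreover have "w f < w e" using g(2)[OF f] True by simp
      ultimately show "f \<in> {f\<in>B'. w f < w e}" by blast
    qed
    then have "connects ends {f\<in>B'. w f < w e} u v" by (rule conn_mono[OF _ H0c])
    then show False using eK by blast
  next
    case False
    have "w g \<noteq> w e" using inj gK(2) eB gB unfolding inj_on_def by blast
    then have lt: "w e < w g" using False by simp
    obtain a b where ab: "ends g = {a, b}" using wfe_obtain[OF wf] gB by blast
    have "\<not> connects ends (H0 - {g}) u v"
    proof
      assume "connects ends (H0 - {g}) u v"
      then have "P (H0 - {g})" using H0sub P_def by auto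
      then have "card H0 \<le> card (H0 - {g})" using H0(2) by blast
      moreover have "card (H0 - {g}) < card H0" using finH0 g(1) by (rule card_Diff1_less)
      ultimately show False by simp
    qed
    then have sd: "(connects ends (H0 - {g}) u a \<and> connects ends (H0 - {g}) b v) \<or>
         (connects ends (H0 - {g}) u b \<and> connects ends (H0 - {g}) a v)"
      using sides[OF H0c _ ab] by simp
    let ?L = "{f\<in>B'. w f < w g}"
    have HL: "H0 - {g} \<subseteq> ?L"
    proof
      fix f assume f: "f \<in> H0 - {g}"
      then have fB: "f \<in> B'" using H0sub K_sub by blast
      have "w f \<noteq> w g" using inj f gB fB unfolding inj_on_def by blast
      moreover have "w f \<le> w g" using g(2) f by blast
      ultimately show "f \<in> ?L" using fB by simp
    qed
    have eL: "e \<in> ?L" using eB lt by simp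
    have cuv: "connects ends ?L u v" by (rule conn_edge[of e ?L ends u v, OF eL e(2) uv])
    have "connects ends ?L a b"
    proof (rule disjE[OF sd])
      assume A: "connects ends (H0 - {g}) u a \<and> connects ends (H0 - {g}) b v"
      have 1: "connects ends ?L a u" using conn_sym[OF conn_mono[OF HL, of ends u a]] A by blast
      have 2: "connects ends ?L v b" using conn_sym[OF conn_mono[OF HL, of ends b v]] A by blast
      show ?thesis using conn_trans[OF conn_trans[OF 1 cuv] 2] .
    next
      assume A: "connects ends (H0 - {g}) u b \<and> connects ends (H0 - {g}) a v"
      have 1: "connects ends ?L a v" using conn_mono[OF HL, of ends a v] A by blast
      have 2: "connects ends ?L u b" using conn_mono[OF HL, of ends u b] A by blast
      show ?thesis using conn_trans[OF conn_trans[OF 1 conn_sym[OF cuv]] 2] .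
    qed
    then show False using gK' ab by blast
  qed
qed

lemma K_tree: "is_spanning_tree n ends K"
  unfolding is_spanning_tree_def
proof (intro conjI)
  show "finite K" using fin K_sub finite_subset by blast
  show "\<forall>e\<in>K. ends e \<subseteq> {0..<n}"
  proof
    fix e assume "e \<in> K"
    then have "e \<in> B" using K_sub by auto
    then obtain u v where "ends e = {u, v}" using wfe_obtain[OF wf] by blast
    then show "ends e \<subseteq> {0..<n}" using wfeD[OF wf \<open>e \<in> B\<close>] by auto
  qed
  show "\<forall>u\<in>{0..<n}. \<forall>v\<in>{0..<n}. connects ends K u v" using K_span by auto
  show "\<forall>e\<in>K. \<forall>u v. ends e = {u, v} \<longrightarrow> \<not> connects ends (K - {e}) u v" using K_acyc by blast
qed

lemma exch:
  assumes T: "is_spanning_tree n ends F" "F \<subseteq> B" and g: "g \<in> F" "ends g = {a, b}"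
    and L: "connects ends {f\<in>B'. w f < w g} a b"
  shows "\<exists>h. h \<in> B' \<and> h \<notin> F \<and> w h < w g \<and> is_spanning_tree n ends (insert h (F - {g}))"
proof -
  define S where "S = {x. connects ends (F - {g}) a x}"
  have nab: "\<not> connects ends (F - {g}) a b" using T g unfolding is_spanning_tree_def by blast
  have "a \<in> S" "b \<notin> S" using nab S_def by auto
  from cross[OF L this] obtain h x0 y0 where h: "h \<in> B'" "w h < w g" "ends h = {x0, y0}" "x0 \<in> S" "y0 \<notin> S"
    by auto
  have xy: "x0 \<noteq> y0" "x0 < n" "y0 < n" using wfeD[OF wf _ h(3)] h(1) by auto
  have hF: "h \<notin> F"
  proof
    assume "h \<in> F"
    then have "h \<in> F - {g}" using h(2) by auto
    then have "connects ends (F - {g}) x0 y0" using conn_edge h(3) xy by metis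
    then have "y0 \<in> S" using h(4) S_def conn_trans by blast
    then show False using h(5) by simp
  qed
  show ?thesis using tree_exchange[OF T(1) g S_def hF h(3,4,5) xy(3,2)] h hF by blast
qed

lemma tree_sub_K:
  assumes T: "is_spanning_tree n ends F" and FK: "F \<subseteq> K"
  shows "F = K"
proof (rule ccontr)
  assume "F \<noteq> K"
  then obtain e where e: "e \<in> K" "e \<notin> F" using FK by blast
  then have "e \<in> B" using K_sub by auto
  then obtain u v where uv: "ends e = {u, v}" using wfe_obtain[OF wf] by blast
  have "u < n" "v < n" using wfeD[OF wf \<open>e \<in> B\<close> uv] by auto
  then have "connects ends F u v" using T unfolding is_spanning_tree_def by auto
  then have "connects ends (K - {e}) u v" using conn_mono[of F "K - {e}"] FK e by auto
  then show False using K_acyc e uv by blast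
qed

lemma K2:
  assumes T: "is_spanning_tree n ends F" "F \<subseteq> B'" and ne: "F \<noteq> K"
  shows "\<exists>F'. is_spanning_tree n ends F' \<and> F' \<subseteq> B' \<and> sum w F' < sum w F"
proof -
  obtain g where g: "g \<in> F" "g \<notin> K" using tree_sub_K[OF T(1)] ne by blast
  have gB: "g \<in> B'" using g T by auto
  obtain a b where ab: "ends g = {a, b}" using wfe_obtain[OF wf] gB by blast
  obtain u v where uv: "ends g = {u, v}" "connects ends {f\<in>B'. w f < w g} u v"
    using g gB unfolding K_def by blast
  have L: "connects ends {f\<in>B'. w f < w g} a b" using conn_swap[OF _ uv(2)] ab uv(1) by simp
  from exch[OF T(1) _ g(1) ab L] T obtain h where h: "h \<in> B'" "h \<notin> F" "w h < w g"
    "is_spanning_tree n ends (insert h (F - {g}))" by auto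
  have finF: "finite F" using T unfolding is_spanning_tree_def by auto
  have "sum w (insert h (F - {g})) = sum w F - w g + w h"
    using finF h(2) g(1) by (simp add: sum_diff1)
  then show ?thesis using h T(2) by (intro exI[of _ "insert h (F - {g})"]) auto
qed

lemma K_min_B':
  assumes T: "is_spanning_tree n ends F" "F \<subseteq> B'"
  shows "sum w K \<le> sum w F" and "F \<noteq> K \<Longrightarrow> sum w K < sum w F"
proof -
  define TT where "TT = {F. is_spanning_tree n ends F \<and> F \<subseteq> B'}"
  have finTT: "finite TT" by (rule finite_subset[of _ "Pow B'"]) (auto simp: TT_def fin)
  have "K \<in> TT" unfolding TT_def using K_tree K_sub by auto
  then obtain Fm where Fm: "Fm \<in> TT" "\<And>F. F \<in> TT \<Longrightarrow> sum w Fm \<le> sum w F"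
    using finTT fin_argmin[of TT "sum w"] by blast
  have "Fm = K"
  proof (rule ccontr)
    assume "Fm \<noteq> K"
    from K2[OF _ _ this] Fm(1) obtain F' where "is_spanning_tree n ends F'" "F' \<subseteq> B'" "sum w F' < sum w Fm"
      unfolding TT_def by auto
    then show False using Fm(2)[of F'] unfolding TT_def by auto
  qed
  then have min: "\<And>F. F \<in> TT \<Longrightarrow> sum w K \<le> sum w F" using Fm by simp
  show "sum w K \<le> sum w F" using min T TT_def by auto
  assume "F \<noteq> K"
  from K2[OF T this] obtain F' where "is_spanning_tree n ends F'" "F' \<subseteq> B'" "sum w F' < sum w F" by auto
  then show "sum w K < sum w F" using min[of F'] TT_def by force
qed

lemma K_min_B:
  assumes T: "is_spanning_tree n ends F" "F \<subseteq> B"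
  shows "sum w K \<le> sum w F \<and> (F \<noteq> K \<longrightarrow> sum w K < sum w F)"
  using T
proof (induction "card (F - B')" arbitrary: F rule: less_induct)
  case less
  show ?case
  proof (cases "F \<subseteq> B'")
    case True then show ?thesis using K_min_B'[OF less.prems(1) True] by blast
  next
    case False
    then obtain g where g: "g \<in> F" "g \<notin> B'" by blast
    then have gB: "g \<in> B" "w g > c" using less.prems(2) by auto
    obtain a b where ab: "ends g = {a, b}" using wfe_obtain[OF wf gB(1)] by blast
    have abn: "a < n" "b < n" using wfeD[OF wf gB(1) ab] by auto
    have cab: "connects ends B' a b" using span abn by blast
    have sub: "B' \<subseteq> {f\<in>B'. w f < w g}" using gB(2) by auto
    have L: "connects ends {f\<in>B'. w f < w g} a b" by (rule conn_mono[OF sub cab])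
    from exch[OF less.prems g(1) ab L] obtain h where h: "h \<in> B'" "h \<notin> F" "w h < w g"
      "is_spanning_tree n ends (insert h (F - {g}))" by blast
    have finF: "finite F" using less.prems(1) unfolding is_spanning_tree_def by blast
    have s: "sum w (insert h (F - {g})) = sum w F - w g + w h"
      using finF h(2) g(1) by (simp add: sum_diff1)
    have eq: "insert h (F - {g}) - B' = (F - B') - {g}" using h(1) by blast
    have "card ((F - B') - {g}) < card (F - B')"
      using finF g by (intro card_Diff1_less) auto
    then have lt: "card (insert h (F - {g}) - B') < card (F - B')" using eq by simp
    have sub2: "insert h (F - {g}) \<subseteq> B" using h(1) less.prems(2) by blast
    have "sum w K \<le> sum w (insert h (F - {g}))" using less.hyps[OF lt h(4) sub2] by blast
    then show ?thesis using s h(3) by simp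
  qed
qed

lemma mst_iff: "is_mst n ends w B F \<longleftrightarrow> F = K"
proof
  assume m: "is_mst n ends w B F"
  then have T: "is_spanning_tree n ends F" "F \<subseteq> B" unfolding is_mst_def by blast+
  have KB: "K \<subseteq> B" using K_sub by blast
  have "sum w F \<le> sum w K" using m K_tree KB unfolding is_mst_def by blast
  then show "F = K" using K_min_B[OF T] by linarith
next
  assume FK: "F = K"
  have KB: "K \<subseteq> B" using K_sub by blast
  have "\<forall>F'. F' \<subseteq> B \<longrightarrow> is_spanning_tree n ends F' \<longrightarrow> sum w K \<le> sum w F'"
    using K_min_B by blast
  then show "is_mst n ends w B F" unfolding is_mst_def using K_tree KB FK by blast
qed

lemma K_light:
  assumes L: "L \<subseteq> B" "\<forall>e\<in>L. w e \<le> t" "t \<le> c" "\<forall>u<n. \<forall>v<n. connects ends L u v"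
  shows "\<forall>e\<in>K. w e \<le> t"
proof (rule ccontr)
  assume "\<not> (\<forall>e\<in>K. w e \<le> t)"
  then obtain e where e: "e \<in> K" "w e > t" by force
  then have eB: "e \<in> B" using K_sub by blast
  obtain u v where uv: "ends e = {u, v}" using wfe_obtain[OF wf eB] by blast
  have "u < n" "v < n" using wfeD[OF wf eB uv] by auto
  then have cL: "connects ends L u v" using L(4) by blast
  have sub: "L \<subseteq> {f\<in>B'. w f < w e}"
  proof
    fix f assume f: "f \<in> L"
    then have "w f \<le> t" using L(2) by blast
    then show "f \<in> {f\<in>B'. w f < w e}" using f L(1,3) e(2) by auto
  qed
  have "connects ends {f\<in>B'. w f < w e} u v" by (rule conn_mono[OF sub cL])
  then show False using e(1) uv unfolding K_def by blast
qed

end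

lemma wfe_mono: "wfe n ends A \<Longrightarrow> B \<subseteq> A \<Longrightarrow> wfe n ends B"
  unfolding wfe_def by blast

lemma core:
  fixes w :: "'e \<Rightarrow> real"
  assumes wf: "wfe n ends A"
    and fin: "finite {e\<in>A. w e \<le> c}"
    and inj: "inj_on w {e\<in>A. w e \<le> c}"
    and k: "k \<ge> 1" and c: "c \<ge> 0"
    and lay: "\<And>j u v. 1 \<le> j \<Longrightarrow> j \<le> k \<Longrightarrow> u < n \<Longrightarrow> v < n \<Longrightarrow>
       connects ends {e\<in>A. real (j - 1) * (c / real k) < w e \<and> w e \<le> real j * (c / real k)} u v"
  shows "Tk_exists_and_cheap n ends w A k c"
proof -
  define d where "d = c / real k"
  have d0: "d \<ge> 0" using c k unfolding d_def by simp
  have kd: "real k * d = c" using k unfolding d_def by simp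
  have main: "\<exists>Ts. msts n ends w A j = Some Ts \<and> length Ts = j \<and>
      (\<forall>F\<in>set Ts. F \<subseteq> A \<and> (\<forall>e\<in>F. w e \<le> real j * d))" if "j \<le> k" for j
    using that
  proof (induction j)
    case 0 then show ?case by simp
  next
    case (Suc j)
    then obtain Ts where Ts: "msts n ends w A j = Some Ts" "length Ts = j"
      "\<forall>F\<in>set Ts. F \<subseteq> A \<and> (\<forall>e\<in>F. w e \<le> real j * d)" by auto
    define B where "B = A - \<Union>(set Ts)"
    define L where "L = {e\<in>A. real (Suc j - 1) * d < w e \<and> w e \<le> real (Suc j) * d}"
    have Lc: "\<forall>u<n. \<forall>v<n. connects ends L u v"
      using lay[of "Suc j"] Suc.prems unfolding L_def d_def by auto
    have LB: "L \<subseteq> B"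
    proof
      fix e assume e: "e \<in> L"
      then have "e \<in> A" "w e > real j * d" unfolding L_def by auto
      moreover have "e \<notin> \<Union>(set Ts)" using Ts(3) \<open>w e > real j * d\<close> by force
      ultimately show "e \<in> B" unfolding B_def by blast
    qed
    have td: "real (Suc j) * d \<le> c" using Suc.prems d0 kd
      by (metis mult_right_mono of_nat_le_iff)
    have Lt: "\<forall>e\<in>L. w e \<le> real (Suc j) * d" unfolding L_def by blast
    have BA: "B \<subseteq> A" unfolding B_def by blast
    have subc: "{e\<in>B. w e \<le> c} \<subseteq> {e\<in>A. w e \<le> c}" using BA by blast
    have sub2: "L \<subseteq> {e\<in>B. w e \<le> c}" using LB Lt td by force
    interpret kr n ends w B c
    proof
      show "wfe n ends B" by (rule wfe_mono[OF wf BA])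
      show "finite {e\<in>B. w e \<le> c}" by (rule finite_subset[OF subc fin])
      show "inj_on w {e\<in>B. w e \<le> c}" by (rule inj_on_subset[OF inj subc])
      show "\<forall>u<n. \<forall>v<n. connects ends {e\<in>B. w e \<le> c} u v"
        using Lc conn_mono[OF sub2] by blast
    qed
    have ex1: "\<exists>!F. is_mst n ends w B F" by (rule ex1I[of _ K]) (simp_all add: mst_iff)
    have the: "(THE F. is_mst n ends w B F) = K" by (rule the_equality) (simp_all add: mst_iff)
    have light: "\<forall>e\<in>K. w e \<le> real (Suc j) * d" using K_light[OF LB Lt td Lc] .
    have ms: "msts n ends w A (Suc j) = Some (Ts @ [K])"
      using Ts(1) ex1 the unfolding B_def by (simp add: Let_def)
    have mono: "real j * d \<le> real (Suc j) * d" using d0 by (simp add: mult_right_mono)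
    have "\<forall>F\<in>set (Ts @ [K]). F \<subseteq> A \<and> (\<forall>e\<in>F. w e \<le> real (Suc j) * d)"
    proof
      fix F assume "F \<in> set (Ts @ [K])"
      then have "F \<in> set Ts \<or> F = K" by auto
      then show "F \<subseteq> A \<and> (\<forall>e\<in>F. w e \<le> real (Suc j) * d)"
      proof
        assume F: "F \<in> set Ts"
        then have "F \<subseteq> A" "\<forall>e\<in>F. w e \<le> real j * d" using Ts(3) by blast+
        then show ?thesis using mono by auto
      next
        assume "F = K" then show ?thesis using light K_sub BA by blast
      qed
    qed
    then show ?case using ms Ts(2) by auto
  qed
  obtain Ts where Ts: "msts n ends w A k = Some Ts" "length Ts = k"
      "\<forall>F\<in>set Ts. F \<subseteq> A \<and> (\<forall>e\<in>F. w e \<le> real k * d)" using main[of k] by auto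
  have "Ts \<noteq> []" using Ts(2) k by auto
  then have "last Ts \<in> set Ts" by simp
  then have "\<forall>e\<in>last Ts. w e \<le> c" using Ts(3) kd by auto
  then show ?thesis unfolding Tk_exists_and_cheap_def using Ts(1) by simp
qed

definition FS :: "'e set \<Rightarrow> 'e set set" where "FS A = {F. finite F \<and> F \<subseteq> A}"

lemma msts_inv:
  "msts n ends w A j = Some Ts \<Longrightarrow> length Ts = j \<and> Ts \<in> lists (FS A)"
proof (induction j arbitrary: Ts)
  case 0 then show ?case by simp
next
  case (Suc j)
  obtain Ts0 where T0: "msts n ends w A j = Some Ts0"
    using Suc.prems by (cases "msts n ends w A j") auto
  define B where "B = A - \<Union>(set Ts0)"
  have ex1: "\<exists>!F. is_mst n ends w B F" and eq: "Ts = Ts0 @ [THE F. is_mst n ends w B F]"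
    using Suc.prems T0 unfolding B_def by (auto simp: Let_def split: if_splits)
  have "is_mst n ends w B (THE F. is_mst n ends w B F)" using theI'[OF ex1] .
  then have "(THE F. is_mst n ends w B F) \<in> FS A"
    unfolding is_mst_def is_spanning_tree_def FS_def B_def by blast
  then show ?case using Suc.IH[OF T0] eq by simp
qed

lemma msts_Suc_iff:
  "msts n ends w A (Suc j) = Some Ts' \<longleftrightarrow>
   (\<exists>Ts\<in>lists (FS A). \<exists>F0\<in>FS A. Ts' = Ts @ [F0] \<and> msts n ends w A j = Some Ts \<and>
      is_mst n ends w (A - \<Union>(set Ts)) F0 \<and>
      (\<forall>F\<in>FS A. is_mst n ends w (A - \<Union>(set Ts)) F \<longrightarrow> F = F0))"
  (is "?L \<longleftrightarrow> ?R")
proof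
  assume L: ?L
  obtain Ts0 where T0: "msts n ends w A j = Some Ts0"
    using L by (cases "msts n ends w A j") auto
  define B where "B = A - \<Union>(set Ts0)"
  have ex1: "\<exists>!F. is_mst n ends w B F" and eq: "Ts' = Ts0 @ [THE F. is_mst n ends w B F]"
    using L T0 unfolding B_def by (auto simp: Let_def split: if_splits)
  define F0 where "F0 = (THE F. is_mst n ends w B F)"
  have m: "is_mst n ends w B F0" using theI'[OF ex1] F0_def by simp
  then have "F0 \<in> FS A"
    unfolding is_mst_def is_spanning_tree_def FS_def B_def by blast
  moreover have "Ts0 \<in> lists (FS A)" using msts_inv[OF T0] by simp
  moreover have "\<forall>F\<in>FS A. is_mst n ends w B F \<longrightarrow> F = F0" using ex1 m by blast
  ultimately show ?R using T0 eq m unfolding F0_def B_def by blast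
next
  assume ?R
  then obtain Ts F0 where R: "Ts' = Ts @ [F0]" "msts n ends w A j = Some Ts"
    "is_mst n ends w (A - \<Union>(set Ts)) F0"
    "\<forall>F\<in>FS A. is_mst n ends w (A - \<Union>(set Ts)) F \<longrightarrow> F = F0" by blast
  define B where "B = A - \<Union>(set Ts)"
  have all: "\<And>F. is_mst n ends w B F \<Longrightarrow> F = F0"
  proof -
    fix F assume "is_mst n ends w B F"
    moreover then have "F \<in> FS A" unfolding is_mst_def is_spanning_tree_def FS_def B_def by blast
    ultimately show "F = F0" using R(4) unfolding B_def by blast
  qed
  have ex1: "\<exists>!F. is_mst n ends w B F" using R(3) all unfolding B_def by blast
  have the: "(THE F. is_mst n ends w B F) = F0" using R(3) all unfolding B_def by (rule the_equality)
  show ?L using R(1,2) ex1 the unfolding B_def by (simp add: Let_def)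
qed

lemma is_mst_alt:
  assumes "B \<subseteq> A"
  shows "is_mst n ends w B F0 \<longleftrightarrow> F0 \<subseteq> B \<and> is_spanning_tree n ends F0 \<and>
     (\<forall>F'\<in>{F'\<in>FS A. F' \<subseteq> B \<and> is_spanning_tree n ends F'}. sum w F0 \<le> sum w F')"
proof -
  have eq: "\<And>F'. F' \<in> {F'\<in>FS A. F' \<subseteq> B \<and> is_spanning_tree n ends F'} \<longleftrightarrow> F' \<subseteq> B \<and> is_spanning_tree n ends F'"
    using assms unfolding FS_def is_spanning_tree_def by auto
  show ?thesis unfolding is_mst_def Ball_def eq by (simp add: imp_conjL)
qed

lemma countable_FS: "countable A \<Longrightarrow> countable (FS A)"
  unfolding FS_def by (rule countable_Collect_finite_subset)

context
  fixes M :: "'x measure" and w :: "'x \<Rightarrow> 'e \<Rightarrow> real" and A :: "'e set"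
  assumes cA: "countable A" and wm: "\<And>e. e \<in> A \<Longrightarrow> (\<lambda>X. w X e) \<in> borel_measurable M"
begin

lemma sum_meas: "F \<subseteq> A \<Longrightarrow> (\<lambda>X. sum (w X) F) \<in> borel_measurable M"
  by (rule borel_measurable_sum) (use wm in blast)

lemma is_mst_meas:
  assumes "B \<subseteq> A"
  shows "{X \<in> space M. is_mst n ends (w X) B Fz} \<in> sets M"
proof (cases "Fz \<subseteq> B \<and> is_spanning_tree n ends Fz")
  case True
  let ?T = "{F'\<in>FS A. F' \<subseteq> B \<and> is_spanning_tree n ends F'}"
  have eq: "{X \<in> space M. is_mst n ends (w X) B Fz} =
        {X \<in> space M. \<forall>F'\<in>?T. sum (w X) Fz \<le> sum (w X) F'}"
    using is_mst_alt[OF assms] True by blast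
  have cT: "countable ?T" using countable_FS[OF cA] by (rule countable_subset[rotated]) blast
  have FzA: "Fz \<subseteq> A" using True assms by blast
  show ?thesis unfolding eq
  proof (rule sets.sets_Collect_countable_All'[OF _ cT])
    fix F' assume "F' \<in> ?T"
    then have "F' \<subseteq> A" unfolding FS_def by blast
    then show "{X \<in> space M. sum (w X) Fz \<le> sum (w X) F'} \<in> sets M"
      using sum_meas[OF FzA] sum_meas by (intro borel_measurable_le) auto
  qed
next
  case False
  then have "{X \<in> space M. is_mst n ends (w X) B Fz} = {}" unfolding is_mst_def by blast
  then show ?thesis by (metis sets.empty_sets)
qed

lemma msts_meas: "{X \<in> space M. msts n ends (w X) A j = Some Ts} \<in> sets M"
proof (induction j arbitrary: Ts)
  case 0 then show ?case by (cases "Ts = []") auto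
next
  case (Suc j)
  have cL: "countable (lists (FS A))" using countable_FS[OF cA] by simp
  have cF: "countable (FS A)" using countable_FS[OF cA] .
  have eq: "{X \<in> space M. msts n ends (w X) A (Suc j) = Some Ts} =
     {X \<in> space M. \<exists>Ts0\<in>lists (FS A). \<exists>F0\<in>FS A. Ts = Ts0 @ [F0] \<and> msts n ends (w X) A j = Some Ts0 \<and>
      is_mst n ends (w X) (A - \<Union>(set Ts0)) F0 \<and>
      (\<forall>F\<in>FS A. is_mst n ends (w X) (A - \<Union>(set Ts0)) F \<longrightarrow> F = F0)}"
    by (simp only: msts_Suc_iff)
  show ?case unfolding eq
  proof (rule sets.sets_Collect_countable_Ex'[OF _ cL])
    fix Ts0 assume "Ts0 \<in> lists (FS A)"
    have BA: "A - \<Union>(set Ts0) \<subseteq> A" by blast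
    show "{X \<in> space M. \<exists>F0\<in>FS A. Ts = Ts0 @ [F0] \<and> msts n ends (w X) A j = Some Ts0 \<and>
      is_mst n ends (w X) (A - \<Union>(set Ts0)) F0 \<and>
      (\<forall>F\<in>FS A. is_mst n ends (w X) (A - \<Union>(set Ts0)) F \<longrightarrow> F = F0)} \<in> sets M"
    proof (rule sets.sets_Collect_countable_Ex'[OF _ cF])
      fix F0 assume "F0 \<in> FS A"
      have s1: "{X \<in> space M. msts n ends (w X) A j = Some Ts0} \<in> sets M" by (rule Suc.IH)
      have s2: "{X \<in> space M. is_mst n ends (w X) (A - \<Union>(set Ts0)) F0} \<in> sets M"
        by (rule is_mst_meas[OF BA])
      have s3: "{X \<in> space M. \<forall>F\<in>FS A. is_mst n ends (w X) (A - \<Union>(set Ts0)) F \<longrightarrow> F = F0} \<in> sets M"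
      proof (rule sets.sets_Collect_countable_All'[OF _ cF])
        fix F assume "F \<in> FS A"
        show "{X \<in> space M. is_mst n ends (w X) (A - \<Union>(set Ts0)) F \<longrightarrow> F = F0} \<in> sets M"
          using is_mst_meas[where Fz=F, OF BA] by (intro sets.sets_Collect_imp) (auto simp: sets.sets_Collect_const)
      qed
      have "{X \<in> space M. Ts = Ts0 @ [F0] \<and> msts n ends (w X) A j = Some Ts0 \<and>
          is_mst n ends (w X) (A - \<Union>(set Ts0)) F0 \<and>
          (\<forall>F\<in>FS A. is_mst n ends (w X) (A - \<Union>(set Ts0)) F \<longrightarrow> F = F0)} =
          {X \<in> space M. Ts = Ts0 @ [F0]} \<inter> ({X \<in> space M. msts n ends (w X) A j = Some Ts0} \<inter>
          ({X \<in> space M. is_mst n ends (w X) (A - \<Union>(set Ts0)) F0} \<inter>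
           {X \<in> space M. \<forall>F\<in>FS A. is_mst n ends (w X) (A - \<Union>(set Ts0)) F \<longrightarrow> F = F0}))" by blast
      moreover have "{X \<in> space M. Ts = Ts0 @ [F0]} \<in> sets M" by (cases "Ts = Ts0 @ [F0]") auto
      ultimately show "{X \<in> space M. Ts = Ts0 @ [F0] \<and> msts n ends (w X) A j = Some Ts0 \<and>
          is_mst n ends (w X) (A - \<Union>(set Ts0)) F0 \<and>
          (\<forall>F\<in>FS A. is_mst n ends (w X) (A - \<Union>(set Ts0)) F \<longrightarrow> F = F0)} \<in> sets M"
        using s1 s2 s3 by (simp only: sets.Int)
    qed
  qed
qed

lemma event_meas:
  assumes k: "k \<ge> 1"
  shows "{X \<in> space M. Tk_exists_and_cheap n ends (w X) A k c} \<in> sets M"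
proof -
  let ?LS = "{Ts\<in>lists (FS A). Ts \<noteq> []}"
  have cL: "countable ?LS" using countable_FS[OF cA] by (rule countable_subset[rotated, OF countable_lists]) blast
  have eq: "{X \<in> space M. Tk_exists_and_cheap n ends (w X) A k c} =
     {X \<in> space M. \<exists>Ts\<in>?LS. msts n ends (w X) A k = Some Ts \<and> (\<forall>e\<in>last Ts. w X e \<le> c)}"
  proof (intro Collect_cong conj_cong refl)
    fix X
    show "Tk_exists_and_cheap n ends (w X) A k c \<longleftrightarrow>
      (\<exists>Ts\<in>?LS. msts n ends (w X) A k = Some Ts \<and> (\<forall>e\<in>last Ts. w X e \<le> c))"
    proof
      assume "Tk_exists_and_cheap n ends (w X) A k c"
      then obtain Ts where Ts: "msts n ends (w X) A k = Some Ts" "\<forall>e\<in>last Ts. w X e \<le> c"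
        unfolding Tk_exists_and_cheap_def by (auto split: option.splits)
      moreover have "Ts \<in> ?LS" using msts_inv[OF Ts(1)] k by auto
      ultimately show "\<exists>Ts\<in>?LS. msts n ends (w X) A k = Some Ts \<and> (\<forall>e\<in>last Ts. w X e \<le> c)" by blast
    next
      assume "\<exists>Ts\<in>?LS. msts n ends (w X) A k = Some Ts \<and> (\<forall>e\<in>last Ts. w X e \<le> c)"
      then show "Tk_exists_and_cheap n ends (w X) A k c" unfolding Tk_exists_and_cheap_def by auto
    qed
  qed
  show ?thesis unfolding eq
  proof (rule sets.sets_Collect_countable_Ex'[OF _ cL])
    fix Ts assume Ts: "Ts \<in> ?LS"
    then have lT: "last Ts \<in> FS A" by (simp add: in_lists_conv_set)
    then have fl: "finite (last Ts)" and lA: "last Ts \<subseteq> A" unfolding FS_def by auto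
    have s2: "{X \<in> space M. \<forall>e\<in>last Ts. w X e \<le> c} \<in> sets M"
    proof (rule sets.sets_Collect_countable_All'[OF _ countable_finite[OF fl]])
      fix e assume "e \<in> last Ts"
      then have "e \<in> A" using lA by blast
      then show "{X \<in> space M. w X e \<le> c} \<in> sets M" using wm by measurable
    qed
    have "{X \<in> space M. msts n ends (w X) A k = Some Ts \<and> (\<forall>e\<in>last Ts. w X e \<le> c)} =
      {X \<in> space M. msts n ends (w X) A k = Some Ts} \<inter> {X \<in> space M. \<forall>e\<in>last Ts. w X e \<le> c}" by blast
    then show "{X \<in> space M. msts n ends (w X) A k = Some Ts \<and> (\<forall>e\<in>last Ts. w X e \<le> c)} \<in> sets M"
      using msts_meas s2 by simp
  qed
qed

end

definition good_law :: "real measure \<Rightarrow> bool" where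
  "good_law P \<longleftrightarrow> prob_space P \<and> sets P = sets borel \<and> (\<forall>x. emeasure P {x} = 0)"

lemma good_law_space: "good_law P \<Longrightarrow> space P = UNIV"
  unfolding good_law_def by (metis sets_eq_imp_space_eq space_borel)

lemma pps: "good_law P \<Longrightarrow> product_prob_space (\<lambda>_. P)"
  unfolding good_law_def
  by (simp add: product_prob_space_def product_prob_space_axioms_def product_sigma_finite_def
      prob_space_imp_sigma_finite)

lemma pm_prob: "good_law P \<Longrightarrow> prob_space (PiM I (\<lambda>_. P))"
  using pps product_prob_space.axioms
  by (metis prob_space_PiM good_law_def)

lemma cyl:
  assumes gl: "good_law P" and J: "finite J" "J \<subseteq> I" and A: "\<And>j. j \<in> J \<Longrightarrow> A j \<in> sets borel"
  shows "measure (PiM I (\<lambda>_. P)) {X \<in> space (PiM I (\<lambda>_. P)). \<forall>j\<in>J. X j \<in> A j} = (\<Prod>j\<in>J. measure P (A j))"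
proof -
  interpret product_prob_space "\<lambda>_. P" I using pps[OF gl] by simp
  have sP: "sets P = sets borel" using gl unfolding good_law_def by simp
  have "emeasure (PiM I (\<lambda>_. P)) {X \<in> space (PiM I (\<lambda>_. P)). \<forall>j\<in>J. X j \<in> A j} = (\<Prod>j\<in>J. emeasure P (A j))"
    using emeasure_PiM_Collect[of J A, OF J(2,1)] A sP by simp
  then show ?thesis
    using emeasure_eq_measure M.emeasure_eq_measure
    by (simp add: prod_ennreal measure_nonneg prod_nonneg)
qed

lemma cyl_sets:
  assumes gl: "good_law P" and J: "finite J" "J \<subseteq> I" and A: "\<And>j. j \<in> J \<Longrightarrow> A j \<in> sets borel"
  shows "{X \<in> space (PiM I (\<lambda>_. P)). \<forall>j\<in>J. X j \<in> A j} \<in> sets (PiM I (\<lambda>_. P))"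
proof -
  have sP: "sets P = sets borel" using gl unfolding good_law_def by simp
  show ?thesis
  proof (rule sets.sets_Collect_finite_All[OF _ J(1)])
    fix j assume "j \<in> J"
    then show "{X \<in> space (PiM I (\<lambda>_. P)). X j \<in> A j} \<in> sets (PiM I (\<lambda>_. P))"
      using J A sP by (intro sets_Collect_single) auto
  qed
qed

lemma null_coord:
  assumes gl: "good_law P" and J: "finite J" "J \<subseteq> I" "i \<in> J"
    and h: "h \<in> borel_measurable (PiM (J - {i}) (\<lambda>_. P))"
  shows "{X \<in> space (PiM I (\<lambda>_. P)). X i = h (restrict X (J - {i}))} \<in> null_sets (PiM I (\<lambda>_. P))"
proof -
  interpret product_prob_space "\<lambda>_. P" I using pps[OF gl] by simp
  have spP: "space P = UNIV" using good_law_space[OF gl] .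
  have sP: "sets P = sets borel" using gl unfolding good_law_def by simp
  let ?J' = "J - {i}"
  have Jeq: "J = insert i ?J'" using J by blast
  define Bs where "Bs = {x \<in> space (PiM J (\<lambda>_. P)). x i = h (restrict x ?J')}"
  have hm: "(\<lambda>x. h (restrict x ?J')) \<in> borel_measurable (PiM J (\<lambda>_. P))"
    using measurable_compose[OF measurable_restrict_subset[of ?J' J "\<lambda>_. P"] h] by blast
  have Bs_sets: "Bs \<in> sets (PiM J (\<lambda>_. P))"
  proof -
    have mc: "measurable (PiM J (\<lambda>_. P)) P = measurable (PiM J (\<lambda>_. P)) borel"
      by (rule measurable_cong_sets[OF refl sP])
    have ci: "(\<lambda>x. x i) \<in> borel_measurable (PiM J (\<lambda>_. P))"
      using measurable_component_singleton[OF J(3), of "\<lambda>_. P"] mc by simp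
    show ?thesis unfolding Bs_def by (rule borel_measurable_eq[OF ci hm])
  qed
  have eqE: "{X \<in> space (PiM I (\<lambda>_. P)). X i = h (restrict X ?J')} = prod_emb I (\<lambda>_. P) J Bs"
  proof -
    have rr: "\<And>X. restrict (restrict X J) ?J' = restrict X ?J'" by (auto simp: restrict_def fun_eq_iff)
    have ri: "\<And>X. restrict X J i = X i" using J(3) by simp
    show ?thesis unfolding Bs_def prod_emb_def vimage_def using J
      by (auto simp only: rr ri mem_Collect_eq Int_iff space_PiM PiE_iff restrict_PiE_iff
          restrict_apply' simp_thms intro: extensional_arb)
  qed
  have "emeasure (PiM J (\<lambda>_. P)) Bs = (\<integral>\<^sup>+x. indicator Bs x \<partial>(PiM J (\<lambda>_. P)))"
    using Bs_sets by simp
  also have "\<dots> = (\<integral>\<^sup>+ x. (\<integral>\<^sup>+ y. indicator Bs (x(i := y)) \<partial>P) \<partial>(PiM ?J' (\<lambda>_. P)))"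
    using product_nn_integral_insert[of ?J' i "indicator Bs"] J Bs_sets Jeq
    by (metis Diff_iff finite_Diff insertI1 borel_measurable_indicator)
  also have "\<dots> = (\<integral>\<^sup>+ x. 0 \<partial>(PiM ?J' (\<lambda>_. P)))"
  proof (rule nn_integral_cong)
    fix x assume x: "x \<in> space (PiM ?J' (\<lambda>_. P))"
    have "\<And>y. indicator Bs (x(i := y)) = (indicator {h x} y :: ennreal)"
    proof -
      fix y
      have r: "restrict (x(i := y)) ?J' = x"
        using x by (auto simp: space_PiM PiE_def extensional_def restrict_def fun_eq_iff)
      have "x(i := y) \<in> space (PiM J (\<lambda>_. P))"
        using x J spP by (auto simp: space_PiM PiE_def extensional_def)
      then show "indicator Bs (x(i := y)) = (indicator {h x} y :: ennreal)"
        unfolding Bs_def using r by (auto simp: indicator_def)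
    qed
    then have "(\<integral>\<^sup>+ y. indicator Bs (x(i := y)) \<partial>P) = (\<integral>\<^sup>+ y. indicator {h x} y \<partial>P)" by simp
    also have "\<dots> = emeasure P {h x}" using sP by (intro nn_integral_indicator) simp
    also have "\<dots> = 0" using gl unfolding good_law_def by simp
    finally show "(\<integral>\<^sup>+ y. indicator Bs (x(i := y)) \<partial>P) = 0" .
  qed
  also have "\<dots> = 0" by simp
  finally have "emeasure (PiM J (\<lambda>_. P)) Bs = 0" .
  then have "emeasure (PiM I (\<lambda>_. P)) (prod_emb I (\<lambda>_. P) J Bs) = 0"
    using emeasure_PiM_emb'[OF J(2,1) Bs_sets] by simp
  moreover have "prod_emb I (\<lambda>_. P) J Bs \<in> sets (PiM I (\<lambda>_. P))"
    using J Bs_sets by (intro measurable_prod_emb) auto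
  ultimately show ?thesis unfolding eqE by (simp add: null_sets_def)
qed

abbreviation "Pexp \<equiv> density lborel (exponential_density 1)"
abbreviation "Punif \<equiv> uniform_measure lborel {0<..<(1::real)}"

lemma gl_exp: "good_law Pexp"
  unfolding good_law_def
proof (intro conjI allI)
  show "prob_space Pexp" by (rule prob_space_exponential_density) simp
  show "sets Pexp = sets borel" by simp
  fix x :: real
  have "emeasure Pexp {x} = (\<integral>\<^sup>+ y. ennreal (exponential_density 1 y) * indicator {x} y \<partial>lborel)"
    by (rule emeasure_density) auto
  also have "\<dots> = 0" by (rule nn_integral_null_set) auto
  finally show "emeasure Pexp {x} = 0" .
qed

lemma gl_unif: "good_law Punif"
  unfolding good_law_def
proof (intro conjI allI)
  show "prob_space Punif" by (rule prob_space_uniform_measure) auto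
  show "sets Punif = sets borel" by simp
  fix x :: real
  have "emeasure Punif {x} = emeasure lborel ({0<..<1} \<inter> {x}) / emeasure lborel {0<..<(1::real)}"
    by (rule emeasure_uniform_measure) auto
  also have "emeasure lborel ({0<..<1} \<inter> {x}) = 0"
  proof -
    have "emeasure lborel ({0<..<1} \<inter> {x}) \<le> emeasure lborel {x}" by (rule emeasure_mono) auto
    then show ?thesis by simp
  qed
  finally show "emeasure Punif {x} = 0" by simp
qed

lemma exp_le: "0 \<le> a \<Longrightarrow> measure Pexp {..a} = 1 - exp (- a)"
proof -
  assume a: "0 \<le> a"
  have "emeasure Pexp {..a} = ennreal (erlang_CDF 0 1 a)" by (rule emeasure_erlang_density) simp
  then have "emeasure Pexp {..a} = ennreal (1 - exp (- a))" using a by (simp add: erlang_CDF_def)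
  then show ?thesis using a by (simp add: measure_def)
qed

lemma exp_nonpos: "measure Pexp {..0} = 0"
  using exp_le[of 0] by simp

lemma exp_Ioc: "0 \<le> a \<Longrightarrow> a \<le> b \<Longrightarrow> measure Pexp {a<..b} = exp (- a) - exp (- b)"
proof -
  assume ab: "0 \<le> a" "a \<le> b"
  interpret prob_space Pexp by (rule prob_space_exponential_density) simp
  have "{a<..b} = {..b} - {..a}" by auto
  then have "measure Pexp {a<..b} = measure Pexp {..b} - measure Pexp {..a}"
    using ab by (simp add: finite_measure_Diff)
  then show ?thesis using exp_le ab by simp
qed

lemma unif_Ioc: "0 \<le> a \<Longrightarrow> a \<le> b \<Longrightarrow> b < 1 \<Longrightarrow> measure Punif {a<..b} = b - a"
proof -
  assume ab: "0 \<le> a" "a \<le> b" "b < 1"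
  have "{0<..<1} \<inter> {a<..b} = {a<..b}" using ab by auto
  then have "measure Punif {a<..b} = measure lborel {a<..b} / measure lborel {0<..<(1::real)}"
    by (subst measure_uniform_measure) auto
  then show ?thesis using ab by simp
qed

lemma unif_le: "0 \<le> a \<Longrightarrow> a < 1 \<Longrightarrow> measure Punif {..a} = a"
proof -
  assume ab: "0 \<le> a" "a < 1"
  have "{0<..<1} \<inter> {..a} = {0<..a}" using ab by auto
  then have "measure Punif {..a} = measure lborel {0<..a} / measure lborel {0<..<(1::real)}"
    by (subst measure_uniform_measure) auto
  then show ?thesis using ab by simp
qed

lemma lim_A1: "(\<lambda>n::nat. exp (- ln (real n) / 8) / (1 - exp (- ln (real n) / 8))) \<longlonglongrightarrow> 0"
  by real_asymp
lemma lim_A2: "(\<lambda>n::nat. 2 ^ n * exp (- (3/16) * real n * ln (real n))) \<longlonglongrightarrow> 0"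
  by real_asymp
lemma lim_A3: "(\<lambda>n::nat. ln (real n) ^ 3 / real n) \<longlonglongrightarrow> 0"
  by real_asymp
lemma lim_A4: "(\<lambda>n::nat. ln (real n) / real n) \<longlonglongrightarrow> 0"
  by real_asymp

definition cross :: "nat \<Rightarrow> nat set \<Rightarrow> (nat \<times> nat) set" where
  "cross n S = {(i, j). i < j \<and> j < n \<and> (i \<in> S \<longleftrightarrow> j \<notin> S)}"

lemma cross_sub: "cross n S \<subseteq> vpairs n"
  unfolding cross_def vpairs_def by auto

lemma finite_vpairs: "finite (vpairs n)"
  unfolding vpairs_def by (rule finite_subset[of _ "{..<n} \<times> {..<n}"]) auto

lemma card_cross:
  assumes S: "S \<subseteq> {..<n}"
  shows "card (cross n S) = card S * (n - card S)"
proof -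
  define f where "f = (\<lambda>(a::nat, b::nat). (min a b, max a b))"
  have inj: "inj_on f (S \<times> ({..<n} - S))"
  proof (rule inj_onI)
    fix x y assume x: "x \<in> S \<times> ({..<n} - S)" and y: "y \<in> S \<times> ({..<n} - S)" and e: "f x = f y"
    obtain a b where ab: "x = (a, b)" "a \<in> S" "b \<notin> S" using x by auto
    obtain a' b' where ab': "y = (a', b')" "a' \<in> S" "b' \<notin> S" using y by auto
    have "min a b = min a' b'" "max a b = max a' b'" using e ab ab' unfolding f_def by auto
    then have "a = a' \<and> b = b'" using ab ab' by (metis max_def min_def)
    then show "x = y" using ab ab' by simp
  qed
  have img: "f ` (S \<times> ({..<n} - S)) = cross n S"
  proof
    show "f ` (S \<times> ({..<n} - S)) \<subseteq> cross n S"
    proof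
      fix p assume "p \<in> f ` (S \<times> ({..<n} - S))"
      then obtain a b where ab: "p = f (a, b)" "a \<in> S" "b < n" "b \<notin> S" by auto
      have "a < n" using ab S by auto
      have "a \<noteq> b" using ab by auto
      then show "p \<in> cross n S" using ab \<open>a < n\<close> unfolding f_def cross_def by (auto simp: min_def max_def)
    qed
  next
    show "cross n S \<subseteq> f ` (S \<times> ({..<n} - S))"
    proof
      fix p assume p: "p \<in> cross n S"
      then obtain i j where ij: "p = (i, j)" "i < j" "j < n" "i \<in> S \<longleftrightarrow> j \<notin> S" unfolding cross_def by auto
      show "p \<in> f ` (S \<times> ({..<n} - S))"
      proof (cases "i \<in> S")
        case True
        then have "(i, j) \<in> S \<times> ({..<n} - S)" using ij by auto
        moreover have "f (i, j) = p" using ij unfolding f_def by auto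
        ultimately show ?thesis by force
      next
        case False
        then have "(j, i) \<in> S \<times> ({..<n} - S)" using ij by auto
        moreover have "f (j, i) = p" using ij unfolding f_def by auto
        ultimately show ?thesis by force
      qed
    qed
  qed
  have "card (cross n S) = card (S \<times> ({..<n} - S))" using card_image[OF inj] img by simp
  also have "\<dots> = card S * card ({..<n} - S)" by (rule card_cartesian_product)
  also have "card ({..<n} - S) = n - card S" using S by (simp add: card_Diff_subset finite_subset)
  finally show ?thesis .
qed

lemma cut_conn:
  fixes L :: "'e set"
  assumes cut: "\<And>S. S \<subseteq> {..<n} \<Longrightarrow> S \<noteq> {} \<Longrightarrow> 2 * card S \<le> n \<Longrightarrow> \<exists>p\<in>cross n S. R p"
    and edge: "\<And>p. p \<in> vpairs n \<Longrightarrow> R p \<Longrightarrow> connects ends L (fst p) (snd p)"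
    and uv: "u < n" "v < n"
  shows "connects ends L u v"
proof (rule ccontr)
  assume nc: "\<not> connects ends L u v"
  define C where "C = {x. x < n \<and> connects ends L u x}"
  have CV: "C \<subseteq> {..<n}" unfolding C_def by auto
  have uC: "u \<in> C" using uv unfolding C_def by simp
  have vC: "v \<notin> C" using nc unfolding C_def by simp
  define D where "D = {..<n} - C"
  have vD: "v \<in> D" using vC uv unfolding D_def by simp
  have finC: "finite C" using CV finite_subset by blast
  have cardD: "card D = n - card C" unfolding D_def using CV finC by (simp add: card_Diff_subset)
  have cardC: "card C \<le> n" using CV by (metis card_lessThan card_mono finite_lessThan)
  have closed: "\<And>i j. (i, j) \<in> vpairs n \<Longrightarrow> R (i, j) \<Longrightarrow> (i \<in> C \<longleftrightarrow> j \<in> C)"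
  proof -
    fix i j assume ij: "(i, j) \<in> vpairs n" "R (i, j)"
    have c: "connects ends L i j" using edge[OF ij] by simp
    have n: "i < n" "j < n" using ij(1) unfolding vpairs_def by auto
    show "i \<in> C \<longleftrightarrow> j \<in> C"
      using c conn_sym[OF c] conn_trans n unfolding C_def by blast
  qed
  show False
  proof (cases "2 * card C \<le> n")
    case True
    obtain p where p: "p \<in> cross n C" "R p" using cut[OF CV _ True] uC by blast
    obtain i j where ij: "p = (i, j)" by (cases p)
    have "(i, j) \<in> vpairs n" using p(1) ij cross_sub by blast
    then show False using closed p ij unfolding cross_def by auto
  next
    case False
    have "2 * card D \<le> n" using False cardD cardC by simp
    moreover have "D \<subseteq> {..<n}" "D \<noteq> {}" using vD unfolding D_def by auto
    ultimately obtain p where p: "p \<in> cross n D" "R p" using cut by blast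
    obtain i j where ij: "p = (i, j)" by (cases p)
    have v: "(i, j) \<in> vpairs n" using p(1) ij cross_sub by blast
    then have "i < n" "j < n" unfolding vpairs_def by auto
    then show False using closed[OF v] p ij unfolding cross_def D_def by auto
  qed
qed

definition SS :: "nat \<Rightarrow> nat set set" where
  "SS n = {S. S \<subseteq> {..<n} \<and> S \<noteq> {} \<and> 2 * card S \<le> n}"

definition gS :: "nat \<Rightarrow> nat \<Rightarrow> real" where
  "gS n s = exp (- (3/2) * ln (real n) / real n * (real s * real (n - s)))"

definition Fb :: "nat \<Rightarrow> real" where
  "Fb n = (\<Sum>S\<in>SS n. gS n (card S))"

lemma finite_SS: "finite (SS n)"
  unfolding SS_def by (rule finite_subset[of _ "Pow {..<n}"]) auto

lemma Fb_group: "Fb n \<le> (\<Sum>s\<in>{1..n}. if 2 * s \<le> n then real (n choose s) * gS n s else 0)"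
proof -
  have fin: "finite (SS n)" by (rule finite_SS)
  have img: "card ` SS n \<subseteq> {1..n}"
  proof
    fix s assume "s \<in> card ` SS n"
    then obtain S where S: "S \<in> SS n" "s = card S" by auto
    then have "S \<subseteq> {..<n}" "S \<noteq> {}" unfolding SS_def by auto
    moreover have "finite S" using \<open>S \<subseteq> {..<n}\<close> finite_subset by blast
    ultimately have "1 \<le> card S" "card S \<le> n"
      by (auto simp: Suc_le_eq card_gt_0_iff) (metis card_lessThan card_mono finite_lessThan)
    then show "s \<in> {1..n}" using S by auto
  qed
  have "Fb n = (\<Sum>s\<in>{1..n}. \<Sum>S\<in>{S. S \<in> SS n \<and> card S = s}. gS n (card S))"
    unfolding Fb_def by (rule sum.group[OF fin _ img, symmetric]) simp
  also have "\<dots> = (\<Sum>s\<in>{1..n}. real (card {S. S \<in> SS n \<and> card S = s}) * gS n s)"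
    by (intro sum.cong refl) simp
  also have "\<dots> \<le> (\<Sum>s\<in>{1..n}. if 2 * s \<le> n then real (n choose s) * gS n s else 0)"
  proof (rule sum_mono)
    fix s assume "s \<in> {1..n}"
    show "real (card {S. S \<in> SS n \<and> card S = s}) * gS n s \<le> (if 2 * s \<le> n then real (n choose s) * gS n s else 0)"
    proof (cases "2 * s \<le> n")
      case False
      then have e: "{S. S \<in> SS n \<and> card S = s} = {}" unfolding SS_def by auto
      show ?thesis unfolding e using False by simp
    next
      case True
    have "{S. S \<in> SS n \<and> card S = s} \<subseteq> {S. S \<subseteq> {..<n} \<and> card S = s}" unfolding SS_def by auto
    then have "card {S. S \<in> SS n \<and> card S = s} \<le> card {S. S \<subseteq> {..<n} \<and> card S = s}"
      by (rule card_mono[rotated]) (rule finite_subset[of _ "Pow {..<n}"], auto)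
    also have "\<dots> = n choose s" using n_subsets[of "{..<n}" s] by simp
    finally have "real (card {S. S \<in> SS n \<and> card S = s}) * gS n s \<le> real (n choose s) * gS n s"
      unfolding gS_def by (intro mult_right_mono) auto
    then show ?thesis using True by simp
    qed
  qed
  finally show ?thesis .
qed

lemma term_bound:
  assumes n: "2 \<le> n" and s: "1 \<le> s" "2 * s \<le> n"
  shows "real (n choose s) * gS n s \<le>
     exp (- ln (real n) / 8) ^ s + real (n choose s) * exp (- (3/16) * real n * ln (real n))"
proof -
  define L where "L = ln (real n)"
  define N where "N = real n"
  have L0: "L > 0" using n unfolding L_def by simp
  have N0: "N \<ge> 2" using n unfolding N_def by simp
  have nsr: "real (n - s) = N - real s" using s unfolding N_def by simp
  have g: "gS n s = exp (- (3/2) * L / N * (real s * (N - real s)))"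
    unfolding gS_def L_def N_def using nsr N_def by simp
  have c0: "real (n choose s) \<ge> 0" by simp
  have s2: "2 * real s \<le> N" using s(2) unfolding N_def by linarith
  show ?thesis
  proof (cases "4 * s \<le> n")
    case True
    have s4: "4 * real s \<le> N" using True unfolding N_def by linarith
    have "real (n choose s) \<le> real n ^ s" using binomial_le_pow[of s n] s
      by (metis of_nat_le_iff of_nat_power le_trans mult_le_cancel2 nat_le_linear one_le_mult_iff Suc_1 le_add2 mult_2 add_leD2)
    also have "real n ^ s = exp (real s * L)" unfolding L_def using n by (simp add: exp_of_nat_mult)
    finally have b1: "real (n choose s) \<le> exp (real s * L)" .
    have "(9/8) * real s * L \<le> (3/2) * L / N * (real s * (N - real s))"
    proof -
      have "(3/4) * N \<le> N - real s" using s4 by simp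
      then have "real s * ((3/4) * N) \<le> real s * (N - real s)" by (intro mult_left_mono) auto
      moreover have "0 \<le> (3/2) * L / N" using L0 N0 by simp
      ultimately have "(3/2) * L / N * (real s * ((3/4) * N)) \<le> (3/2) * L / N * (real s * (N - real s))"
        by (rule mult_left_mono)
      moreover have "(3/2) * L / N * (real s * ((3/4) * N)) = (9/8) * real s * L" using N0 by (simp add: field_simps)
      ultimately show ?thesis by simp
    qed
    then have b2: "gS n s \<le> exp (- (9/8) * real s * L)" unfolding g by simp
    have "real (n choose s) * gS n s \<le> exp (real s * L) * exp (- (9/8) * real s * L)"
      using b1 b2 c0 by (intro mult_mono) (auto simp: gS_def)
    also have "\<dots> = exp (- L / 8) ^ s" by (simp add: exp_add[symmetric] exp_of_nat_mult[symmetric] algebra_simps)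
    finally have "real (n choose s) * gS n s \<le> exp (- L / 8) ^ s" .
    moreover have "0 \<le> real (n choose s) * exp (- (3/16) * N * L)" by simp
    ultimately show ?thesis unfolding L_def N_def by linarith
  next
    case False
    have s4: "4 * real s \<ge> N" using False unfolding N_def by linarith
    have "(3/16) * N * L \<le> (3/2) * L / N * (real s * (N - real s))"
    proof -
      have h1: "N / 4 \<le> real s" using s4 by simp
      have h2: "N / 2 \<le> N - real s" using s2 by simp
      have "(N / 4) * (N / 2) \<le> real s * (N - real s)" using h1 h2 N0 by (intro mult_mono) auto
      moreover have "0 \<le> (3/2) * L / N" using L0 N0 by simp
      ultimately have "(3/2) * L / N * ((N / 4) * (N / 2)) \<le> (3/2) * L / N * (real s * (N - real s))"
        by (rule mult_left_mono)
      moreover have "(3/2) * L / N * ((N / 4) * (N / 2)) = (3/16) * N * L" using N0 by (simp add: field_simps)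
      ultimately show ?thesis by simp
    qed
    then have "gS n s \<le> exp (- (3/16) * N * L)" unfolding g by simp
    then have "real (n choose s) * gS n s \<le> real (n choose s) * exp (- (3/16) * N * L)"
      using c0 by (rule mult_left_mono)
    moreover have "0 \<le> exp (- L / 8) ^ s" by simp
    ultimately show ?thesis unfolding L_def N_def by linarith
  qed
qed

lemma Fb_bound:
  assumes n: "2 \<le> n"
  shows "Fb n \<le> exp (- ln (real n) / 8) / (1 - exp (- ln (real n) / 8)) +
                 2 ^ n * exp (- (3/16) * real n * ln (real n))"
proof -
  define r where "r = exp (- ln (real n) / 8)"
  define E where "E = exp (- (3/16) * real n * ln (real n))"
  have r0: "0 < r" unfolding r_def by simp
  have r1: "r < 1" unfolding r_def using n by simp
  have E0: "0 \<le> E" unfolding E_def by simp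
  have "Fb n \<le> (\<Sum>s\<in>{1..n}. if 2 * s \<le> n then real (n choose s) * gS n s else 0)" by (rule Fb_group)
  also have "\<dots> \<le> (\<Sum>s\<in>{1..n}. r ^ s + real (n choose s) * E)"
  proof (rule sum_mono)
    fix s assume s: "s \<in> {1..n}"
    show "(if 2 * s \<le> n then real (n choose s) * gS n s else 0) \<le> r ^ s + real (n choose s) * E"
    proof (cases "2 * s \<le> n")
      case True then show ?thesis using term_bound[OF n _ True] s unfolding r_def E_def by simp
    next
      case False then show ?thesis using r0 E0 by simp
    qed
  qed
  also have "\<dots> = (\<Sum>s\<in>{1..n}. r ^ s) + E * (\<Sum>s\<in>{1..n}. real (n choose s))"
    by (simp add: sum.distrib sum_distrib_left mult.commute)
  also have "(\<Sum>s\<in>{1..n}. r ^ s) \<le> r / (1 - r)"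
  proof -
    have "(\<Sum>s\<in>{1..n}. r ^ s) = (\<Sum>i<n. r ^ Suc i)"
      by (rule sum.reindex_bij_witness[of _ Suc "\<lambda>s. s - 1"]) auto
    also have "\<dots> = r * (\<Sum>i<n. r ^ i)" by (simp add: sum_distrib_left)
    also have "(\<Sum>i<n. r ^ i) = (1 - r ^ n) / (1 - r)" using r1 by (simp add: sum_gp_strict)
    also have "r * ((1 - r ^ n) / (1 - r)) \<le> r / (1 - r)"
      using r0 r1 by (simp add: divide_right_mono mult_left_le)
    finally show ?thesis .
  qed
  also have "(\<Sum>s\<in>{1..n}. real (n choose s)) \<le> 2 ^ n"
  proof -
    have "(\<Sum>s\<in>{1..n}. real (n choose s)) \<le> (\<Sum>s\<le>n. real (n choose s))"
      by (rule sum_mono2) auto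
    also have "\<dots> = 2 ^ n" using choose_row_sum[of n] by (metis of_nat_numeral of_nat_power of_nat_sum)
    finally show ?thesis .
  qed
  then have "E * (\<Sum>s\<in>{1..n}. real (n choose s)) \<le> E * 2 ^ n" using E0 by (rule mult_left_mono)
  finally show ?thesis unfolding r_def E_def by (simp add: mult.commute)
qed

lemma Fb_lim: "Fb \<longlonglongrightarrow> 0"
proof (rule tendsto_sandwich[of "\<lambda>_. 0" _ _ "\<lambda>n. exp (- ln (real n) / 8) / (1 - exp (- ln (real n) / 8)) +
                 2 ^ n * exp (- (3/16) * real n * ln (real n))"])
  show "\<forall>\<^sub>F n in sequentially. 0 \<le> Fb n"
    unfolding Fb_def gS_def by (intro always_eventually allI sum_nonneg) simp
  show "\<forall>\<^sub>F n in sequentially. Fb n \<le> exp (- ln (real n) / 8) / (1 - exp (- ln (real n) / 8)) +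
                 2 ^ n * exp (- (3/16) * real n * ln (real n))"
    using eventually_ge_at_top[of 2] by eventually_elim (rule Fb_bound)
  show "(\<lambda>_. 0) \<longlonglongrightarrow> (0::real)" by simp
  show "(\<lambda>n. exp (- ln (real n) / 8) / (1 - exp (- ln (real n) / 8)) +
                 2 ^ n * exp (- (3/16) * real n * ln (real n))) \<longlonglongrightarrow> 0"
    using tendsto_add[OF lim_A1 lim_A2] by simp
qed

lemma pow_exp_bound:
  fixes q :: real
  assumes q1: "q \<le> 1" and q: "3/2 * ln (real n) / real n \<le> q" and n: "2 \<le> n"
  shows "(1 - q) ^ (s * (n - s)) \<le> gS n s"
proof -
  have "1 - q \<le> exp (- q)" using exp_ge_add_one_self[of "- q"] by simp
  then have "(1 - q) ^ (s * (n - s)) \<le> exp (- q) ^ (s * (n - s))"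
    using q1 by (intro power_mono) auto
  also have "\<dots> = exp (- q * real (s * (n - s)))" by (simp add: exp_of_nat_mult[symmetric] mult.commute)
  also have "\<dots> \<le> exp (- (3/2 * ln (real n) / real n) * real (s * (n - s)))"
    using q by (intro exp_mono mult_right_mono) auto
  also have "\<dots> = gS n s" unfolding gS_def by simp
  finally show ?thesis .
qed

lemma layer_bad:
  fixes idx :: "nat \<times> nat \<Rightarrow> 'i"
  assumes gl: "good_law P" and inj: "inj_on idx (vpairs n)" and sub: "idx ` vpairs n \<subseteq> I"
    and Iv: "Iv \<in> sets borel" and q: "3/2 * ln (real n) / real n \<le> measure P Iv" and n: "2 \<le> n"
  shows "{X \<in> space (PiM I (\<lambda>_. P)). \<exists>S\<in>SS n. \<forall>p\<in>cross n S. X (idx p) \<notin> Iv} \<in> sets (PiM I (\<lambda>_. P))"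
    and "measure (PiM I (\<lambda>_. P)) {X \<in> space (PiM I (\<lambda>_. P)). \<exists>S\<in>SS n. \<forall>p\<in>cross n S. X (idx p) \<notin> Iv} \<le> Fb n"
proof -
  let ?M = "PiM I (\<lambda>_. P)"
  interpret P: prob_space P using gl unfolding good_law_def by simp
  have spP: "space P = UNIV" by (rule good_law_space[OF gl])
  have sP: "sets P = sets borel" using gl unfolding good_law_def by simp
  define BadS where "BadS S = {X \<in> space ?M. \<forall>j\<in>idx ` cross n S. X j \<in> UNIV - Iv}" for S
  have eq: "{X \<in> space ?M. \<exists>S\<in>SS n. \<forall>p\<in>cross n S. X (idx p) \<notin> Iv} = (\<Union>S\<in>SS n. BadS S)"
    unfolding BadS_def by auto
  have finJ: "finite (idx ` cross n S)" for S
    using finite_subset[OF cross_sub finite_vpairs] by blast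
  have subJ: "idx ` cross n S \<subseteq> I" for S using sub cross_sub by blast
  have Ivc: "UNIV - Iv \<in> sets borel" using Iv by auto
  have BadS_sets: "BadS S \<in> sets ?M" for S
    unfolding BadS_def by (rule cyl_sets[OF gl finJ subJ Ivc])
  have q1: "measure P Iv \<le> 1" by (rule P.prob_le_1)
  have mc: "measure P (UNIV - Iv) = 1 - measure P Iv"
    using P.prob_compl[of Iv] Iv sP spP by simp
  have BadS_meas: "measure ?M (BadS S) \<le> gS n (card S)" if S: "S \<in> SS n" for S
  proof -
    have SV: "S \<subseteq> {..<n}" using S unfolding SS_def by auto
    have "measure ?M (BadS S) = (\<Prod>j\<in>idx ` cross n S. measure P (UNIV - Iv))"
      unfolding BadS_def by (rule cyl[OF gl finJ subJ Ivc])
    also have "\<dots> = (1 - measure P Iv) ^ card (idx ` cross n S)" using mc by simp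
    also have "card (idx ` cross n S) = card (cross n S)"
      by (rule card_image) (rule inj_on_subset[OF inj cross_sub])
    also have "\<dots> = card S * (n - card S)" by (rule card_cross[OF SV])
    finally show ?thesis using pow_exp_bound[OF q1 q n] by simp
  qed
  show "{X \<in> space ?M. \<exists>S\<in>SS n. \<forall>p\<in>cross n S. X (idx p) \<notin> Iv} \<in> sets ?M"
    unfolding eq using finite_SS BadS_sets by (intro sets.finite_UN) auto
  have "measure ?M (\<Union>S\<in>SS n. BadS S) \<le> (\<Sum>S\<in>SS n. measure ?M (BadS S))"
    by (rule measure_UNION_le[OF finite_SS BadS_sets])
  also have "\<dots> \<le> (\<Sum>S\<in>SS n. gS n (card S))" by (rule sum_mono) (rule BadS_meas)
  finally show "measure ?M {X \<in> space ?M. \<exists>S\<in>SS n. \<forall>p\<in>cross n S. X (idx p) \<notin> Iv} \<le> Fb n"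
    unfolding eq Fb_def .
qed

lemma wfe_vpairs: "wfe n pair_ends (vpairs n)"
  unfolding wfe_def
proof
  fix e assume "e \<in> vpairs n"
  then obtain a b where ab: "e = (a, b)" "a < b" "b < n" unfolding vpairs_def by auto
  show "\<exists>u v. u \<noteq> v \<and> u < n \<and> v < n \<and> pair_ends e = {u, v}"
    by (rule exI[of _ a], rule exI[of _ b]) (use ab in \<open>auto simp: pair_ends_def\<close>)
qed

lemma thr_nonneg: "0 \<le> thr k n"
  unfolding thr_def by (cases "n = 0") auto

lemma comp_meas:
  assumes gl: "good_law P" and i: "i \<in> I"
  shows "(\<lambda>X. X i) \<in> borel_measurable (PiM I (\<lambda>_. P))"
proof -
  have sP: "sets P = sets borel" using gl unfolding good_law_def by simp
  have "measurable (PiM I (\<lambda>_. P)) P = measurable (PiM I (\<lambda>_. P)) borel"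
    by (rule measurable_cong_sets[OF refl sP])
  then show ?thesis using measurable_component_singleton[OF i, of "\<lambda>_. P"] by simp
qed

lemma null_pair:
  assumes gl: "good_law P" and pq: "p \<in> I" "q \<in> I" "p \<noteq> q"
  shows "{X \<in> space (PiM I (\<lambda>_. P)). X p = X q} \<in> null_sets (PiM I (\<lambda>_. P))"
proof -
  have J: "finite {p, q}" "{p, q} \<subseteq> I" "p \<in> {p, q}" using pq by auto
  have e: "{p, q} - {p} = {q}" using pq by auto
  have h: "(\<lambda>x. x q) \<in> borel_measurable (PiM ({p, q} - {p}) (\<lambda>_. P))"
    unfolding e by (rule comp_meas[OF gl]) simp
  have "{X \<in> space (PiM I (\<lambda>_. P)). X p = restrict X ({p, q} - {p}) q} \<in> null_sets (PiM I (\<lambda>_. P))"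
    by (rule null_coord[OF gl J h])
  moreover have "\<And>X. restrict X ({p, q} - {p}) q = X q" using pq by simp
  ultimately show ?thesis using pq(3) by (simp add: eq_commute[of q p])
qed

lemma final_sandwich:
  fixes f b :: "nat \<Rightarrow> real"
  assumes ev: "\<forall>\<^sub>F n in sequentially. 1 - b n \<le> f n" and le: "\<And>n. f n \<le> 1" and b: "b \<longlonglongrightarrow> 0"
  shows "f \<longlonglongrightarrow> 1"
proof (rule tendsto_sandwich[of "\<lambda>n. 1 - b n" _ _ "\<lambda>_. 1"])
  show "\<forall>\<^sub>F n in sequentially. 1 - b n \<le> f n" by (rule ev)
  show "\<forall>\<^sub>F n in sequentially. f n \<le> 1" using le by simp
  show "(\<lambda>n. 1 - b n) \<longlonglongrightarrow> 1" using tendsto_diff[OF tendsto_const b, of 1] by simp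
qed simp

lemma simple_model:
  assumes gl: "good_law P" and k: "k \<ge> 1"
    and qb: "\<forall>\<^sub>F n in sequentially. \<forall>j\<in>{1..k}.
       3/2 * ln (real n) / real n \<le> measure P {real (j - 1) * (thr k n / real k)<..real j * (thr k n / real k)}"
  shows "(\<lambda>n. measure (PiM (vpairs n) (\<lambda>_. P))
     {X \<in> space (PiM (vpairs n) (\<lambda>_. P)). Tk_exists_and_cheap n pair_ends X (vpairs n) k (thr k n)}) \<longlonglongrightarrow> 1"
proof (rule final_sandwich[where b = "\<lambda>n. real k * Fb n"])
  show "(\<lambda>n. real k * Fb n) \<longlonglongrightarrow> 0" using tendsto_mult_right_zero[OF Fb_lim] by simp
  fix n
  interpret PM: prob_space "PiM (vpairs n) (\<lambda>_. P)" by (rule pm_prob[OF gl])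
  show "measure (PiM (vpairs n) (\<lambda>_. P))
     {X \<in> space (PiM (vpairs n) (\<lambda>_. P)). Tk_exists_and_cheap n pair_ends X (vpairs n) k (thr k n)} \<le> 1"
    by (rule PM.prob_le_1)
next
  show "\<forall>\<^sub>F n in sequentially. 1 - real k * Fb n \<le> measure (PiM (vpairs n) (\<lambda>_. P))
     {X \<in> space (PiM (vpairs n) (\<lambda>_. P)). Tk_exists_and_cheap n pair_ends X (vpairs n) k (thr k n)}"
    using qb eventually_ge_at_top[of 2]
  proof eventually_elim
    case (elim n)
    note qn = elim(1) and n2 = elim(2)
    let ?M = "PiM (vpairs n) (\<lambda>_. P)"
    interpret PM: prob_space ?M by (rule pm_prob[OF gl])
    define c where "c = thr k n"
    define Iv where "Iv j = {real (j - 1) * (c / real k)<..real j * (c / real k)}" for j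
    define Ev where "Ev = {X \<in> space ?M. Tk_exists_and_cheap n pair_ends X (vpairs n) k c}"
    define Null where "Null = (\<Union>pq\<in>{pq. fst pq \<in> vpairs n \<and> snd pq \<in> vpairs n \<and> fst pq \<noteq> snd pq}.
        {X \<in> space ?M. X (fst pq) = X (snd pq)})"
    define Bad where "Bad j = {X \<in> space ?M. \<exists>S\<in>SS n. \<forall>p\<in>cross n S. id X p \<notin> Iv j}" for j
    have finPQ: "finite {pq. fst pq \<in> vpairs n \<and> snd pq \<in> vpairs n \<and> fst pq \<noteq> snd pq}"
      by (rule finite_subset[of _ "vpairs n \<times> vpairs n"]) (auto simp: finite_vpairs)
    have Null_sets: "Null \<in> sets ?M" and Null_meas: "measure ?M Null \<le> 0"
    proof -
      have each: "{X \<in> space ?M. X (fst pq) = X (snd pq)} \<in> null_sets ?M"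
        if "pq \<in> {pq. fst pq \<in> vpairs n \<and> snd pq \<in> vpairs n \<and> fst pq \<noteq> snd pq}" for pq
        using null_pair[OF gl, of "fst pq" "vpairs n" "snd pq"] that by auto
      have each': "{X \<in> space ?M. X (fst pq) = X (snd pq)} \<in> sets ?M"
        if "pq \<in> {pq. fst pq \<in> vpairs n \<and> snd pq \<in> vpairs n \<and> fst pq \<noteq> snd pq}" for pq
        using each[OF that] by (rule null_setsD2)
      show "Null \<in> sets ?M" unfolding Null_def using finPQ each' by (intro sets.finite_UN) auto
      have "measure ?M Null \<le> (\<Sum>pq\<in>{pq. fst pq \<in> vpairs n \<and> snd pq \<in> vpairs n \<and> fst pq \<noteq> snd pq}.
          measure ?M {X \<in> space ?M. X (fst pq) = X (snd pq)})"
        unfolding Null_def using finPQ each' by (intro measure_UNION_le) auto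
      also have "\<dots> = 0" using each by (intro sum.neutral) (auto simp: measure_def null_setsD1)
      finally show "measure ?M Null \<le> 0" .
    qed
    have qj: "3/2 * ln (real n) / real n \<le> measure P (Iv j)" if "j \<in> {1..k}" for j
      using qn that unfolding Iv_def c_def by blast
    have Bad_sets: "Bad j \<in> sets ?M" and Bad_meas: "measure ?M (Bad j) \<le> Fb n" if "j \<in> {1..k}" for j
      using layer_bad[OF gl inj_on_id _ _ qj[OF that] n2, of "vpairs n"] unfolding Bad_def Iv_def by auto
    have Ev_sets: "Ev \<in> sets ?M" unfolding Ev_def
      by (rule event_meas[where M = "?M" and w = "\<lambda>X e. X e" and A = "vpairs n",
            OF countable_finite[OF finite_vpairs] comp_meas[OF gl] k])
    have cover: "space ?M - Ev \<subseteq> Null \<union> (\<Union>j\<in>{1..k}. Bad j)"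
    proof
      fix X assume X: "X \<in> space ?M - Ev"
      show "X \<in> Null \<union> (\<Union>j\<in>{1..k}. Bad j)"
      proof (rule ccontr)
        assume nX: "X \<notin> Null \<union> (\<Union>j\<in>{1..k}. Bad j)"
        have injX: "inj_on X (vpairs n)"
          using nX X unfolding Null_def inj_on_def by auto
        have lay: "connects pair_ends {e\<in>vpairs n. real (j - 1) * (c / real k) < X e \<and> X e \<le> real j * (c / real k)} u v"
          if j: "1 \<le> j" "j \<le> k" and uv: "u < n" "v < n" for j u v
        proof (rule cut_conn[where R = "\<lambda>p. X p \<in> Iv j"])
          fix S assume S: "S \<subseteq> {..<n}" "S \<noteq> {}" "2 * card S \<le> n"
          then have "S \<in> SS n" unfolding SS_def by auto
          moreover have "X \<notin> Bad j" using nX j by auto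
          ultimately show "\<exists>p\<in>cross n S. X p \<in> Iv j" using X unfolding Bad_def by auto
        next
          fix p assume p: "p \<in> vpairs n" "X p \<in> Iv j"
          then have "p \<in> {e\<in>vpairs n. real (j - 1) * (c / real k) < X e \<and> X e \<le> real j * (c / real k)}"
            unfolding Iv_def by auto
          moreover have "pair_ends p = {fst p, snd p}" "fst p \<noteq> snd p"
            using p(1) unfolding pair_ends_def vpairs_def by auto
          ultimately show "connects pair_ends {e\<in>vpairs n. real (j - 1) * (c / real k) < X e \<and> X e \<le> real j * (c / real k)} (fst p) (snd p)"
            by (intro conn_edge) auto
        qed (use uv in auto)
        have "Tk_exists_and_cheap n pair_ends X (vpairs n) k c"
        proof (rule core[OF wfe_vpairs _ _ k])
          show "finite {e \<in> vpairs n. X e \<le> c}" using finite_vpairs by simp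
          show "inj_on X {e \<in> vpairs n. X e \<le> c}" using injX by (rule inj_on_subset) auto
          show "0 \<le> c" unfolding c_def by (rule thr_nonneg)
        qed (rule lay)
        then show False using X unfolding Ev_def by auto
      qed
    qed
    have U_sets: "(\<Union>j\<in>{1..k}. Bad j) \<in> sets ?M" using Bad_sets by (intro sets.finite_UN) auto
    have "measure ?M (space ?M - Ev) \<le> measure ?M (Null \<union> (\<Union>j\<in>{1..k}. Bad j))"
      using cover Null_sets U_sets by (intro PM.finite_measure_mono) auto
    also have "\<dots> \<le> measure ?M Null + measure ?M (\<Union>j\<in>{1..k}. Bad j)"
      by (rule measure_Un_le[OF Null_sets U_sets])
    also have "measure ?M (\<Union>j\<in>{1..k}. Bad j) \<le> (\<Sum>j\<in>{1..k}. measure ?M (Bad j))"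
      using Bad_sets by (intro measure_UNION_le) auto
    also have "\<dots> \<le> (\<Sum>j\<in>{1..k}. Fb n)" using Bad_meas by (intro sum_mono) auto
    finally have "measure ?M (space ?M - Ev) \<le> real k * Fb n" using Null_meas by simp
    moreover have "measure ?M (space ?M - Ev) = 1 - measure ?M Ev" by (rule PM.prob_compl[OF Ev_sets])
    ultimately show ?case unfolding Ev_def c_def by simp
  qed
qed

lemma thr_lim: "(\<lambda>n. thr k n) \<longlonglongrightarrow> 0"
proof -
  have "(\<lambda>n. (2 * real k) * (ln (real n) / real n)) \<longlonglongrightarrow> 0"
    by (rule tendsto_mult_right_zero[OF lim_A4])
  then show ?thesis unfolding thr_def by (simp add: mult.assoc)
qed

lemma thr_small: "\<forall>\<^sub>F n in sequentially. thr k n \<le> 1/8"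
proof -
  have "\<forall>\<^sub>F n in sequentially. thr k n < 1/8" by (rule order_tendstoD(2)[OF thr_lim]) simp
  then show ?thesis by (rule eventually_mono) simp
qed

lemma d_eq: "k \<ge> 1 \<Longrightarrow> thr k n / real k = 2 * ln (real n) / real n"
  unfolding thr_def by simp

lemma exp_q:
  assumes k: "k \<ge> 1" and j: "j \<in> {1..k}" and c: "thr k n \<le> 1/8" and n: "2 \<le> n"
  shows "3/2 * ln (real n) / real n \<le> measure Pexp {real (j - 1) * (thr k n / real k)<..real j * (thr k n / real k)}"
proof -
  define d where "d = 2 * ln (real n) / real n"
  define a where "a = real (j - 1) * d"
  have dd: "thr k n / real k = d" unfolding d_def using d_eq[OF k] .
  have d0: "0 \<le> d" unfolding d_def using n by simp
  have j1: "1 \<le> j" "j \<le> k" using j by auto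
  have jr: "real j = real (j - 1) + 1" using j1 by simp
  have b: "real j * d = a + d" unfolding a_def jr by (simp add: distrib_right)
  have kd: "real k * d = thr k n" using dd k by (simp add: field_simps)
  have jk: "real j \<le> real k" using j1 by simp
  have "real j * d \<le> real k * d" using jk d0 by (rule mult_right_mono)
  then have jd: "real j * d \<le> thr k n" using kd by simp
  have a0: "0 \<le> a" unfolding a_def using d0 by simp
  have ac: "a \<le> 1/8" using b jd c d0 by linarith
  have dc: "d \<le> 1/8" using b jd c a0 by linarith
  have "measure Pexp {a<..a + d} = exp (- a) - exp (- (a + d))"
    using a0 d0 by (intro exp_Ioc) auto
  also have "\<dots> = exp (- a) * (1 - exp (- d))"
  proof -
    have "exp (- a) * exp (- d) = exp (- (a + d))" by (simp add: mult_exp_exp)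
    then show ?thesis by (simp add: right_diff_distrib)
  qed
  finally have m: "measure Pexp {a<..a + d} = exp (- a) * (1 - exp (- d))" .
  have e1: "7/8 \<le> exp (- a)" using exp_ge_add_one_self[of "- a"] ac by linarith
  have e2: "8/9 * d \<le> 1 - exp (- d)"
  proof -
    have "1 + d \<le> exp d" by (rule exp_ge_add_one_self)
    then have "exp (- d) \<le> 1 / (1 + d)" using d0 by (simp add: exp_minus field_simps)
    moreover have "8/9 * d \<le> 1 - 1 / (1 + d)"
    proof -
      have h: "d * (d * 8) \<le> d * 1" using d0 dc by (intro mult_left_mono) auto
      then show ?thesis using d0 by (simp add: field_simps)
    qed
    ultimately show ?thesis by linarith
  qed
  have "7/8 * (8/9 * d) \<le> exp (- a) * (1 - exp (- d))"
    using e1 e2 d0 by (intro mult_mono) auto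
  moreover have "3/2 * ln (real n) / real n \<le> 7/8 * (8/9 * d)" unfolding d_def using n by (simp add: field_simps)
  ultimately have "3/2 * ln (real n) / real n \<le> measure Pexp {a<..a + d}" using m by simp
  moreover have "{real (j - 1) * d<..real j * d} = {a<..a + d}" using b unfolding a_def by simp
  ultimately show ?thesis unfolding dd by simp
qed

lemma unif_q:
  assumes k: "k \<ge> 1" and j: "j \<in> {1..k}" and c: "thr k n \<le> 1/8" and n: "2 \<le> n"
  shows "3/2 * ln (real n) / real n \<le> measure Punif {real (j - 1) * (thr k n / real k)<..real j * (thr k n / real k)}"
proof -
  define d where "d = 2 * ln (real n) / real n"
  define a where "a = real (j - 1) * d"
  have dd: "thr k n / real k = d" unfolding d_def using d_eq[OF k] .
  have d0: "0 \<le> d" unfolding d_def using n by simp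
  have j1: "1 \<le> j" "j \<le> k" using j by auto
  have jr: "real j = real (j - 1) + 1" using j1 by simp
  have b: "real j * d = a + d" unfolding a_def jr by (simp add: distrib_right)
  have kd: "real k * d = thr k n" using dd k by (simp add: field_simps)
  have jk: "real j \<le> real k" using j1 by simp
  have "real j * d \<le> real k * d" using jk d0 by (rule mult_right_mono)
  then have jd: "real j * d \<le> thr k n" using kd by simp
  have a0: "0 \<le> a" unfolding a_def using d0 by simp
  have "measure Punif {a<..a + d} = d" using a0 d0 jd c b by (subst unif_Ioc) auto
  moreover have "3/2 * ln (real n) / real n \<le> d" unfolding d_def using n by (simp add: field_simps)
  ultimately have "3/2 * ln (real n) / real n \<le> measure Punif {a<..a + d}" by simp
  moreover have "{real (j - 1) * d<..real j * d} = {a<..a + d}" using b unfolding a_def by simp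
  ultimately show ?thesis unfolding dd by simp
qed

theorem exp_part:
  assumes k: "k \<ge> 1"
  shows "(\<lambda>n. measure (exp_model n)
        {X \<in> space (exp_model n). Tk_exists_and_cheap n pair_ends X (vpairs n) k (thr k n)}) \<longlonglongrightarrow> 1"
  unfolding exp_model_def
proof (rule simple_model[OF gl_exp k])
  show "\<forall>\<^sub>F n in sequentially. \<forall>j\<in>{1..k}.
       3/2 * ln (real n) / real n \<le> measure Pexp {real (j - 1) * (thr k n / real k)<..real j * (thr k n / real k)}"
    using thr_small[of k] eventually_ge_at_top[of 2]
  proof eventually_elim
    case (elim n)
    show ?case
    proof
      fix j assume "j \<in> {1..k}"
      then show "3/2 * ln (real n) / real n \<le> measure Pexp {real (j - 1) * (thr k n / real k)<..real j * (thr k n / real k)}"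
        by (rule exp_q[OF k _ elim(1) elim(2)])
    qed
  qed
qed

theorem unif_part:
  assumes k: "k \<ge> 1"
  shows "(\<lambda>n. measure (unif_model n)
        {X \<in> space (unif_model n). Tk_exists_and_cheap n pair_ends X (vpairs n) k (thr k n)}) \<longlonglongrightarrow> 1"
  unfolding unif_model_def
proof (rule simple_model[OF gl_unif k])
  show "\<forall>\<^sub>F n in sequentially. \<forall>j\<in>{1..k}.
       3/2 * ln (real n) / real n \<le> measure Punif {real (j - 1) * (thr k n / real k)<..real j * (thr k n / real k)}"
    using thr_small[of k] eventually_ge_at_top[of 2]
  proof eventually_elim
    case (elim n)
    show ?case
    proof
      fix j assume "j \<in> {1..k}"
      then show "3/2 * ln (real n) / real n \<le> measure Punif {real (j - 1) * (thr k n / real k)<..real j * (thr k n / real k)}"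
        by (rule unif_q[OF k _ elim(1) elim(2)])
    qed
  qed
qed

abbreviation "PI n \<equiv> vpairs n \<times> (UNIV :: nat set)"
abbreviation "PM n \<equiv> PiM (PI n) (\<lambda>_. Pexp)"

lemma PM_def': "poisson_model n = PM n" unfolding poisson_model_def ..

lemma countable_PI: "countable (PI n)"
  using countable_finite[OF finite_vpairs] by simp

lemma cost_meas:
  assumes e: "e \<in> PI n"
  shows "(\<lambda>X. poisson_cost X e) \<in> borel_measurable (PM n)"
  unfolding poisson_cost_def
proof (rule borel_measurable_sum)
  fix l assume "l \<in> {..snd e}"
  have "(fst e, l) \<in> PI n" using e by auto
  then show "(\<lambda>X. X (fst e, l)) \<in> borel_measurable (PM n)" by (rule comp_meas[OF gl_exp])
qed

lemma null_single:
  assumes i: "i \<in> PI n"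
  shows "{X \<in> space (PM n). X i \<le> 0} \<in> null_sets (PM n)"
proof -
  interpret PP: prob_space "PM n" by (rule pm_prob[OF gl_exp])
  have fin: "finite {i}" "{i} \<subseteq> PI n" using i by auto
  have eq: "{X \<in> space (PM n). X i \<le> 0} = {X \<in> space (PM n). \<forall>j\<in>{i}. X j \<in> {..0}}" by auto
  have s: "{X \<in> space (PM n). X i \<le> 0} \<in> sets (PM n)"
    unfolding eq by (rule cyl_sets[OF gl_exp fin]) auto
  have "measure (PM n) {X \<in> space (PM n). X i \<le> 0} = (\<Prod>j\<in>{i}. measure Pexp {..0})"
    unfolding eq by (rule cyl[OF gl_exp fin]) auto
  also have "\<dots> = 0" using exp_nonpos by simp
  finally have "emeasure (PM n) {X \<in> space (PM n). X i \<le> 0} = 0"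
    using PP.emeasure_eq_measure by simp
  then show ?thesis using s by (simp add: null_sets_def)
qed

lemma NullPos:
  "{X \<in> space (PM n). \<exists>i\<in>PI n. X i \<le> 0} \<in> null_sets (PM n)"
proof -
  have "{X \<in> space (PM n). \<exists>i\<in>PI n. X i \<le> 0} = (\<Union>i\<in>PI n. {X \<in> space (PM n). X i \<le> 0})" by auto
  also have "\<dots> \<in> null_sets (PM n)" by (rule null_sets_UN'[OF countable_PI null_single])
  finally show ?thesis .
qed

lemma cost_split: "poisson_cost X (p, a) = X (p, a) + (\<Sum>l<a. X (p, l))"
  unfolding poisson_cost_def by (simp add: lessThan_Suc_atMost[symmetric])

lemma null_dist:
  assumes p: "p \<in> vpairs n" and q: "q \<in> vpairs n" and pq: "p \<noteq> q"
  shows "{X \<in> space (PM n). poisson_cost X (p, a) = poisson_cost X (q, b)} \<in> null_sets (PM n)"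
proof -
  define J where "J = (\<lambda>l. (p, l)) ` {..a} \<union> (\<lambda>l. (q, l)) ` {..b}"
  have J: "finite J" "J \<subseteq> PI n" "(p, a) \<in> J" unfolding J_def using p q by auto
  define h where "h x = (\<Sum>l\<le>b. x (q, l)) - (\<Sum>l<a. x (p, l))" for x :: "(nat \<times> nat) \<times> nat \<Rightarrow> real"
  have inJ: "(q, l) \<in> J - {(p, a)}" if "l \<le> b" for l unfolding J_def using that pq by auto
  have inJ2: "(p, l) \<in> J - {(p, a)}" if "l < a" for l unfolding J_def using that by auto
  have hm: "h \<in> borel_measurable (PiM (J - {(p, a)}) (\<lambda>_. Pexp))"
    unfolding h_def
  proof (intro borel_measurable_diff borel_measurable_sum)
    fix l assume "l \<in> {..b}"
    then show "(\<lambda>x. x (q, l)) \<in> borel_measurable (PiM (J - {(p, a)}) (\<lambda>_. Pexp))"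
      using inJ by (intro comp_meas[OF gl_exp]) auto
  next
    fix l assume "l \<in> {..<a}"
    then show "(\<lambda>x. x (p, l)) \<in> borel_measurable (PiM (J - {(p, a)}) (\<lambda>_. Pexp))"
      using inJ2 by (intro comp_meas[OF gl_exp]) auto
  qed
  have N: "{X \<in> space (PM n). X (p, a) = h (restrict X (J - {(p, a)}))} \<in> null_sets (PM n)"
    by (rule null_coord[OF gl_exp J hm])
  have "\<And>X. h (restrict X (J - {(p, a)})) = h X"
    unfolding h_def using inJ inJ2 by (intro arg_cong2[where f = "(-)"] sum.cong) auto
  moreover have "\<And>X. poisson_cost X (p, a) = poisson_cost X (q, b) \<longleftrightarrow> X (p, a) = h X"
    unfolding h_def using cost_split[of _ p a] by (auto simp: poisson_cost_def)
  ultimately show ?thesis using N by simp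
qed

lemma card_vpairs: "card (vpairs n) \<le> n ^ 2"
proof -
  have "card (vpairs n) \<le> card ({..<n} \<times> {..<n})"
    by (rule card_mono) (auto simp: vpairs_def)
  also have "\<dots> = n ^ 2" by (simp add: card_cartesian_product power2_eq_square)
  finally show ?thesis .
qed

lemma Bad3:
  assumes c: "0 \<le> c"
  shows "{X \<in> space (PM n). \<exists>p\<in>vpairs n. X (p, 0) \<le> c \<and> X (p, 1) \<le> c \<and> X (p, 2) \<le> c} \<in> sets (PM n)"
    and "measure (PM n) {X \<in> space (PM n). \<exists>p\<in>vpairs n. X (p, 0) \<le> c \<and> X (p, 1) \<le> c \<and> X (p, 2) \<le> c}
          \<le> real n ^ 2 * c ^ 3"
proof -
  define T where "T p = {(p, 0::nat), (p, 1), (p, 2)}" for p :: "nat \<times> nat"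
  define B where "B p = {X \<in> space (PM n). \<forall>j\<in>T p. X j \<in> {..c}}" for p
  have eq: "{X \<in> space (PM n). \<exists>p\<in>vpairs n. X (p, 0) \<le> c \<and> X (p, 1) \<le> c \<and> X (p, 2) \<le> c}
      = (\<Union>p\<in>vpairs n. B p)" unfolding B_def T_def by auto
  have T: "finite (T p)" "T p \<subseteq> PI n" if "p \<in> vpairs n" for p unfolding T_def using that by auto
  have Bs: "B p \<in> sets (PM n)" if "p \<in> vpairs n" for p
    unfolding B_def by (rule cyl_sets[OF gl_exp T[OF that]]) auto
  have e1: "measure Pexp {..c} \<le> c"
    using exp_le[OF c] exp_ge_add_one_self[of "- c"] by simp
  have e0: "0 \<le> measure Pexp {..c}" by simp
  have Bm: "measure (PM n) (B p) \<le> c ^ 3" if "p \<in> vpairs n" for p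
  proof -
    have "measure (PM n) (B p) = (\<Prod>j\<in>T p. measure Pexp {..c})"
      unfolding B_def by (rule cyl[OF gl_exp T[OF that]]) auto
    also have "\<dots> = measure Pexp {..c} ^ 3" unfolding T_def by (simp add: power3_eq_cube mult_ac)
    also have "\<dots> \<le> c ^ 3" using e1 e0 by (rule power_mono)
    finally show ?thesis .
  qed
  show "{X \<in> space (PM n). \<exists>p\<in>vpairs n. X (p, 0) \<le> c \<and> X (p, 1) \<le> c \<and> X (p, 2) \<le> c} \<in> sets (PM n)"
    unfolding eq using finite_vpairs Bs by (intro sets.finite_UN) auto
  have "measure (PM n) (\<Union>p\<in>vpairs n. B p) \<le> (\<Sum>p\<in>vpairs n. measure (PM n) (B p))"
    using finite_vpairs Bs by (intro measure_UNION_le) auto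
  also have "\<dots> \<le> (\<Sum>p\<in>vpairs n. c ^ 3)" using Bm by (intro sum_mono) auto
  also have "\<dots> = real (card (vpairs n)) * c ^ 3" by simp
  also have "\<dots> \<le> real n ^ 2 * c ^ 3"
  proof -
    have "real (card (vpairs n)) \<le> real n ^ 2" using card_vpairs[of n] by (metis of_nat_le_iff of_nat_power)
    then show ?thesis using c by (intro mult_right_mono) auto
  qed
  finally show "measure (PM n) {X \<in> space (PM n). \<exists>p\<in>vpairs n. X (p, 0) \<le> c \<and> X (p, 1) \<le> c \<and> X (p, 2) \<le> c}
          \<le> real n ^ 2 * c ^ 3" unfolding eq .
qed

lemma NullDist:
  "{X \<in> space (PM n). \<exists>p\<in>vpairs n. \<exists>q\<in>vpairs n. \<exists>a\<in>{0,1}. \<exists>b\<in>{0,1}. p \<noteq> q \<and>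
      poisson_cost X (p, a) = poisson_cost X (q, b)} \<in> null_sets (PM n)"
proof -
  define N where "N p q a b = {X \<in> space (PM n). p \<noteq> q \<and> poisson_cost X (p, a) = poisson_cost X (q, b)}" for p q a b
  have eq: "{X \<in> space (PM n). \<exists>p\<in>vpairs n. \<exists>q\<in>vpairs n. \<exists>a\<in>{0,1}. \<exists>b\<in>{0,1}. p \<noteq> q \<and>
      poisson_cost X (p, a) = poisson_cost X (q, b)} =
     (\<Union>p\<in>vpairs n. \<Union>q\<in>vpairs n. \<Union>a\<in>{0::nat,1}. \<Union>b\<in>{0::nat,1}. N p q a b)"
    unfolding N_def by blast
  have cv: "countable (vpairs n)" by (rule countable_finite[OF finite_vpairs])
  have c01: "countable {0::nat, 1}" by simp
  have Nn: "N p q a b \<in> null_sets (PM n)" if "p \<in> vpairs n" "q \<in> vpairs n" for p q a b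
  proof (cases "p = q")
    case True then show ?thesis unfolding N_def by simp
  next
    case False
    then have "N p q a b = {X \<in> space (PM n). poisson_cost X (p, a) = poisson_cost X (q, b)}"
      unfolding N_def by simp
    then show ?thesis using null_dist[OF that False] by simp
  qed
  show ?thesis unfolding eq
    by (intro null_sets_UN'[OF cv] null_sets_UN'[OF c01] Nn)
qed

lemma wfe_PI: "wfe n poisson_ends (PI n)"
  using wfe_vpairs[of n] unfolding wfe_def poisson_ends_def by auto

lemma cost0: "poisson_cost X (p, 0) = X (p, 0)"
  unfolding poisson_cost_def by simp

lemma n2c3_lim: "(\<lambda>n. real n ^ 2 * thr k n ^ 3) \<longlonglongrightarrow> 0"
proof -
  have eq: "real n ^ 2 * thr k n ^ 3 = (8 * real k ^ 3) * (ln (real n) ^ 3 / real n)" for n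
  proof (cases "n = 0")
    case True then show ?thesis unfolding thr_def by simp
  next
    case False then show ?thesis unfolding thr_def by (simp add: field_simps power2_eq_square power3_eq_cube)
  qed
  show ?thesis unfolding eq by (rule tendsto_mult_right_zero[OF lim_A3])
qed

lemma pois_cover:
  assumes X: "X \<in> space (PM n)" and k: "k \<ge> 1"
    and pos: "\<forall>i\<in>PI n. 0 < X i"
    and three: "\<forall>p\<in>vpairs n. \<not> (X (p, 0) \<le> c \<and> X (p, 1) \<le> c \<and> X (p, 2) \<le> c)"
    and dist: "\<forall>p\<in>vpairs n. \<forall>q\<in>vpairs n. \<forall>a\<in>{0,1}. \<forall>b\<in>{0,1}. p \<noteq> q \<longrightarrow>
      poisson_cost X (p, a) \<noteq> poisson_cost X (q, b)"
    and lay: "\<forall>j\<in>{1..k}. \<forall>S\<in>SS n. \<exists>p\<in>cross n S. X (p, 0) \<in> {real (j - 1) * (c / real k)<..real j * (c / real k)}"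
    and c: "0 \<le> c"
  shows "Tk_exists_and_cheap n poisson_ends (poisson_cost X) (PI n) k c"
proof -
  let ?E = "{e \<in> PI n. poisson_cost X e \<le> c}"
  have Esub: "?E \<subseteq> vpairs n \<times> {0, 1}"
  proof
    fix e assume e: "e \<in> ?E"
    obtain p m where pm: "e = (p, m)" by (cases e)
    have p: "p \<in> vpairs n" using e pm by auto
    have "m \<le> 1"
    proof (rule ccontr)
      assume "\<not> m \<le> 1"
      then have m2: "2 \<le> m" by simp
      have "(\<Sum>l\<in>{0,1,2::nat}. X (p, l)) \<le> (\<Sum>l\<le>m. X (p, l))"
      proof (rule sum_mono2)
        show "finite {..m}" by simp
        show "{0, 1, 2::nat} \<subseteq> {..m}" using m2 by auto
        fix l assume "l \<in> {..m} - {0, 1, 2}"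
        show "0 \<le> X (p, l)" using pos p by (simp add: less_imp_le)
      qed
      moreover have "(\<Sum>l\<in>{0,1,2::nat}. X (p, l)) = X (p, 0) + X (p, 1) + X (p, 2)" by simp
      moreover have "c < X (p, 0) + X (p, 1) + X (p, 2)"
      proof -
        have "0 < X (p, 0)" "0 < X (p, 1)" "0 < X (p, 2)" using pos p by auto
        moreover have "\<not> (X (p, 0) \<le> c \<and> X (p, 1) \<le> c \<and> X (p, 2) \<le> c)" using three p by blast
        ultimately show ?thesis by linarith
      qed
      ultimately have "c < poisson_cost X (p, m)" unfolding poisson_cost_def by simp
      then show False using e pm by simp
    qed
    then show "e \<in> vpairs n \<times> {0, 1}" using p pm by auto
  qed
  have finE: "finite ?E"
    by (rule finite_subset[OF Esub]) (simp add: finite_vpairs)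
  have injE: "inj_on (poisson_cost X) ?E"
  proof (rule inj_onI)
    fix e e' assume e: "e \<in> ?E" and e': "e' \<in> ?E" and eq: "poisson_cost X e = poisson_cost X e'"
    obtain p a where pa: "e = (p, a)" "p \<in> vpairs n" "a \<in> {0, 1}" using Esub e by blast
    obtain q b where qb: "e' = (q, b)" "q \<in> vpairs n" "b \<in> {0, 1}" using Esub e' by blast
    have pq: "p = q"
    proof (rule ccontr)
      assume "p \<noteq> q"
      then show False using dist pa qb eq by blast
    qed
    have X1: "0 < X (p, 1)" using pos pa by auto
    have c1: "poisson_cost X (p, 1) = X (p, 1) + X (p, 0)" unfolding poisson_cost_def by simp
    have "a = b"
    proof (rule ccontr)
      assume "a \<noteq> b"
      then have "(a = 0 \<and> b = 1) \<or> (a = 1 \<and> b = 0)" using pa qb by auto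
      then show False using eq pa qb pq c1 cost0[of X p] X1 by auto
    qed
    then show "e = e'" using pa qb pq by simp
  qed
  show ?thesis
  proof (rule core[OF wfe_PI finE injE k c])
    fix j u v assume j: "1 \<le> j" "j \<le> k" and uv: "u < n" "v < n"
    let ?L = "{e \<in> PI n. real (j - 1) * (c / real k) < poisson_cost X e \<and> poisson_cost X e \<le> real j * (c / real k)}"
    show "connects poisson_ends ?L u v"
    proof (rule cut_conn[where R = "\<lambda>p. X (p, 0) \<in> {real (j - 1) * (c / real k)<..real j * (c / real k)}"])
      fix S assume S: "S \<subseteq> {..<n}" "S \<noteq> {}" "2 * card S \<le> n"
      then have "S \<in> SS n" unfolding SS_def by auto
      then show "\<exists>p\<in>cross n S. X (p, 0) \<in> {real (j - 1) * (c / real k)<..real j * (c / real k)}"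
        using lay j by auto
    next
      fix p assume p: "p \<in> vpairs n" "X (p, 0) \<in> {real (j - 1) * (c / real k)<..real j * (c / real k)}"
      then have "(p, 0) \<in> ?L" using cost0[of X p] by auto
      moreover have "poisson_ends (p, 0) = {fst p, snd p}" "fst p \<noteq> snd p"
        using p(1) unfolding poisson_ends_def pair_ends_def vpairs_def by auto
      ultimately show "connects poisson_ends ?L (fst p) (snd p)" by (intro conn_edge) auto
    qed (use uv in auto)
  qed
qed

theorem pois_part:
  assumes k: "k \<ge> 1"
  shows "(\<lambda>n. measure (poisson_model n)
        {X \<in> space (poisson_model n).
           Tk_exists_and_cheap n poisson_ends (poisson_cost X) (poisson_edges n) k (thr k n)})
       \<longlonglongrightarrow> 1"
  unfolding poisson_model_def poisson_edges_def
proof (rule final_sandwich[where b = "\<lambda>n. real n ^ 2 * thr k n ^ 3 + real k * Fb n"])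
  show "(\<lambda>n. real n ^ 2 * thr k n ^ 3 + real k * Fb n) \<longlonglongrightarrow> 0"
    using tendsto_add[OF n2c3_lim tendsto_mult_right_zero[OF Fb_lim]] by simp
  fix n
  interpret PP: prob_space "PM n" by (rule pm_prob[OF gl_exp])
  show "measure (PM n) {X \<in> space (PM n). Tk_exists_and_cheap n poisson_ends (poisson_cost X) (PI n) k (thr k n)} \<le> 1"
    by (rule PP.prob_le_1)
next
  have qb: "\<forall>\<^sub>F n in sequentially. \<forall>j\<in>{1..k}.
       3/2 * ln (real n) / real n \<le> measure Pexp {real (j - 1) * (thr k n / real k)<..real j * (thr k n / real k)}"
    using thr_small[of k] eventually_ge_at_top[of 2]
  proof eventually_elim
    case (elim n)
    show ?case
    proof
      fix j assume "j \<in> {1..k}"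
      then show "3/2 * ln (real n) / real n \<le> measure Pexp {real (j - 1) * (thr k n / real k)<..real j * (thr k n / real k)}"
        by (rule exp_q[OF k _ elim(1) elim(2)])
    qed
  qed
  show "\<forall>\<^sub>F n in sequentially. 1 - (real n ^ 2 * thr k n ^ 3 + real k * Fb n) \<le>
     measure (PM n) {X \<in> space (PM n). Tk_exists_and_cheap n poisson_ends (poisson_cost X) (PI n) k (thr k n)}"
    using qb eventually_ge_at_top[of 2]
  proof eventually_elim
    case (elim n)
    note qn = elim(1) and n2 = elim(2)
    let ?M = "PM n"
    interpret PP: prob_space ?M by (rule pm_prob[OF gl_exp])
    define c where "c = thr k n"
    have c0: "0 \<le> c" unfolding c_def by (rule thr_nonneg)
    define Iv where "Iv j = {real (j - 1) * (c / real k)<..real j * (c / real k)}" for j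
    define Ev where "Ev = {X \<in> space ?M. Tk_exists_and_cheap n poisson_ends (poisson_cost X) (PI n) k c}"
    define NP where "NP = {X \<in> space ?M. \<exists>i\<in>PI n. X i \<le> 0}"
    define ND where "ND = {X \<in> space ?M. \<exists>p\<in>vpairs n. \<exists>q\<in>vpairs n. \<exists>a\<in>{0,1}. \<exists>b\<in>{0,1}. p \<noteq> q \<and>
      poisson_cost X (p, a) = poisson_cost X (q, b)}"
    define B3 where "B3 = {X \<in> space ?M. \<exists>p\<in>vpairs n. X (p, 0) \<le> c \<and> X (p, 1) \<le> c \<and> X (p, 2) \<le> c}"
    define Bad where "Bad j = {X \<in> space ?M. \<exists>S\<in>SS n. \<forall>p\<in>cross n S. X ((\<lambda>p. (p, 0::nat)) p) \<notin> Iv j}" for j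
    have NPn: "NP \<in> null_sets ?M" unfolding NP_def by (rule NullPos)
    have NDn: "ND \<in> null_sets ?M" unfolding ND_def by (rule NullDist)
    have NPs: "NP \<in> sets ?M" using NPn by (rule null_setsD2)
    have NDs: "ND \<in> sets ?M" using NDn by (rule null_setsD2)
    have NPm: "measure ?M NP = 0" using NPn by (simp add: measure_def null_setsD1)
    have NDm: "measure ?M ND = 0" using NDn by (simp add: measure_def null_setsD1)
    have B3s: "B3 \<in> sets ?M" and B3m: "measure ?M B3 \<le> real n ^ 2 * c ^ 3"
      unfolding B3_def using Bad3[OF c0] by auto
    have qj: "3/2 * ln (real n) / real n \<le> measure Pexp (Iv j)" if "j \<in> {1..k}" for j
      using qn that unfolding Iv_def c_def by blast
    have injidx: "inj_on (\<lambda>p. (p, 0::nat)) (vpairs n)" by (rule inj_onI) simp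
    have subidx: "(\<lambda>p. (p, 0::nat)) ` vpairs n \<subseteq> PI n" by auto
    have Bad_sets: "Bad j \<in> sets ?M" and Bad_meas: "measure ?M (Bad j) \<le> Fb n" if "j \<in> {1..k}" for j
      using layer_bad[OF gl_exp injidx subidx _ qj[OF that] n2] unfolding Bad_def Iv_def by auto
    have Ev_sets: "Ev \<in> sets ?M" unfolding Ev_def
      by (rule event_meas[where M = "?M" and w = "poisson_cost" and A = "PI n",
            OF countable_PI cost_meas k])
    have cover: "space ?M - Ev \<subseteq> NP \<union> ND \<union> B3 \<union> (\<Union>j\<in>{1..k}. Bad j)"
    proof
      fix X assume X: "X \<in> space ?M - Ev"
      show "X \<in> NP \<union> ND \<union> B3 \<union> (\<Union>j\<in>{1..k}. Bad j)"
      proof (rule ccontr)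
        assume nX: "X \<notin> NP \<union> ND \<union> B3 \<union> (\<Union>j\<in>{1..k}. Bad j)"
        have Xs: "X \<in> space ?M" using X by blast
        have pos: "\<forall>i\<in>PI n. 0 < X i" using nX Xs unfolding NP_def by (auto simp: not_le)
        have three: "\<forall>p\<in>vpairs n. \<not> (X (p, 0) \<le> c \<and> X (p, 1) \<le> c \<and> X (p, 2) \<le> c)"
          using nX Xs unfolding B3_def by blast
        have dist: "\<forall>p\<in>vpairs n. \<forall>q\<in>vpairs n. \<forall>a\<in>{0,1}. \<forall>b\<in>{0,1}. p \<noteq> q \<longrightarrow>
            poisson_cost X (p, a) \<noteq> poisson_cost X (q, b)"
          using nX Xs unfolding ND_def by blast
        have lay: "\<forall>j\<in>{1..k}. \<forall>S\<in>SS n. \<exists>p\<in>cross n S. X (p, 0) \<in> {real (j - 1) * (c / real k)<..real j * (c / real k)}"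
        proof (intro ballI)
          fix j S assume j: "j \<in> {1..k}" and S: "S \<in> SS n"
          have "X \<notin> Bad j" using nX j by blast
          then show "\<exists>p\<in>cross n S. X (p, 0) \<in> {real (j - 1) * (c / real k)<..real j * (c / real k)}"
            using Xs S unfolding Bad_def Iv_def by blast
        qed
        have "Tk_exists_and_cheap n poisson_ends (poisson_cost X) (PI n) k c"
          by (rule pois_cover[OF Xs k pos three dist lay c0])
        then show False using X unfolding Ev_def by blast
      qed
    qed
    have U_sets: "(\<Union>j\<in>{1..k}. Bad j) \<in> sets ?M" using Bad_sets by (intro sets.finite_UN) auto
    have "measure ?M (space ?M - Ev) \<le> measure ?M (NP \<union> ND \<union> B3 \<union> (\<Union>j\<in>{1..k}. Bad j))"
      using cover NPs NDs B3s U_sets by (intro PP.finite_measure_mono) auto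
    also have "\<dots> \<le> measure ?M (NP \<union> ND \<union> B3) + measure ?M (\<Union>j\<in>{1..k}. Bad j)"
      using NPs NDs B3s U_sets by (intro measure_Un_le) auto
    also have "measure ?M (NP \<union> ND \<union> B3) \<le> measure ?M (NP \<union> ND) + measure ?M B3"
      using NPs NDs B3s by (intro measure_Un_le) auto
    also have "measure ?M (NP \<union> ND) \<le> measure ?M NP + measure ?M ND"
      using NPs NDs by (intro measure_Un_le) auto
    also have "measure ?M (\<Union>j\<in>{1..k}. Bad j) \<le> (\<Sum>j\<in>{1..k}. measure ?M (Bad j))"
      using Bad_sets by (intro measure_UNION_le) auto
    also have "\<dots> \<le> (\<Sum>j\<in>{1..k}. Fb n)" using Bad_meas by (intro sum_mono) auto
    finally have "measure ?M (space ?M - Ev) \<le> real n ^ 2 * c ^ 3 + real k * Fb n"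
      using NPm NDm B3m by simp
    moreover have "measure ?M (space ?M - Ev) = 1 - measure ?M Ev" by (rule PP.prob_compl[OF Ev_sets])
    ultimately show ?case unfolding Ev_def c_def by simp
  qed
qed

theorem lemma7p2:
  fixes k :: nat
  assumes "k \<ge> 1"
  shows
    "((\<lambda>n. measure (poisson_model n)
        {X \<in> space (poisson_model n).
           Tk_exists_and_cheap n poisson_ends (poisson_cost X) (poisson_edges n) k (thr k n)})
       \<longlonglongrightarrow> 1) \<and>
    ((\<lambda>n. measure (exp_model n)
        {X \<in> space (exp_model n).
           Tk_exists_and_cheap n pair_ends X (vpairs n) k (thr k n)})
       \<longlonglongrightarrow> 1) \<and>
    ((\<lambda>n. measure (unif_model n)
        {X \<in> space (unif_model n).
           Tk_exists_and_cheap n pair_ends X (vpairs n) k (thr k n)})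
       \<longlonglongrightarrow> 1)"
  using pois_part[OF assms] exp_part[OF assms] unif_part[OF assms] by blast

end
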